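(* For $p\in\{1,2\}$ let $\mathcal F_p=\{x\mapsto\langle w,x\rangle: w\in\mathbb R^d,\ \|w\|_p\le1\}$. Let $\mathcal D_S$ be a distribution on $\mathbb R^d\times\mathbb R$ with $\|x\|_\infty\le1$, $|y|\le1$ a.s., $|f(x)|\le 1$ for all $f\in\mathcal F_p$ and $x$ in the support, and $y=f_S^*(x)+\eta$ with $f_S^*\in\mathcal F_p$, $\mathbb E[\eta\mid x]=0$, $\mathbb E[\eta^2\mid x]=\sigma^2$. Let $S$ be $m$ i.i.d. samples from $\mathcal D_S$ and $f_S\in\arg\min_{f\in\mathcal F_p}\frac1m\sum_{(x,y)\in S}(f(x)-y)^2$. Then for $\delta\in(0,1)$, with probability at least $1-\delta$, $$\Big|\sigma^2-\frac1m\sum_{(x,y)\in S}(f_S(x)-y)^2\Big|\le\begin{cases}8\sqrt{\frac{2\log(2d)}{m}}+12\sqrt{\frac{\log(4/\delta)}{2m}}, & p=1\ (\text{Lasso}),\\[2pt] 8\sqrt{\frac dm}+12\sqrt{\frac{\log(4/\delta)}{2m}}, & p=2\ (\text{Ridge}).\end{cases}$$ *)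

theory Defs
  imports "HOL-Probability.Probability"
begin

definition norm1 :: "real^'d \<Rightarrow> real" where
  "norm1 w = (\<Sum>i\<in>UNIV. \<bar>w $ i\<bar>)"

definition pnorm :: "nat \<Rightarrow> real^'d \<Rightarrow> real" where
  "pnorm p w = (if p = 1 then norm1 w else norm w)"

definition emp_risk :: "nat \<Rightarrow> (nat \<Rightarrow> (real^'d) \<times> real) \<Rightarrow> real^'d \<Rightarrow> real" where
  "emp_risk m S w = (1 / real m) * (\<Sum>i<m. (w \<bullet> fst (S i) - snd (S i))^2)"

definition is_erm :: "nat \<Rightarrow> nat \<Rightarrow> (nat \<Rightarrow> (real^'d) \<times> real) \<Rightarrow> real^'d \<Rightarrow> bool" where
  "is_erm p m S w \<longleftrightarrow> pnorm p w \<le> 1 \<and>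
     (\<forall>v. pnorm p v \<le> 1 \<longrightarrow> emp_risk m S w \<le> emp_risk m S v)"

end

theory Submission
  imports Defs
begin


lemma mcdiarmid_mgf:
  fixes M :: "'a measure" and n :: nat
  assumes M: "prob_space M" and l: "l > 0" and c: "c \<ge> 0"
  shows "f \<in> borel_measurable (PiM {..<n} (\<lambda>_. M)) \<Longrightarrow>
    (\<And>x. x \<in> space (PiM {..<n} (\<lambda>_. M)) \<Longrightarrow> \<bar>f x\<bar> \<le> B) \<Longrightarrow>
    (\<And>x i y. x \<in> space (PiM {..<n} (\<lambda>_. M)) \<Longrightarrow> i < n \<Longrightarrow> y \<in> space M \<Longrightarrow> \<bar>f x - f (x(i:=y))\<bar> \<le> c) \<Longrightarrow>
    (\<integral>\<^sup>+x. ennreal (exp (l * (f x - (\<integral>x. f x \<partial>PiM {..<n} (\<lambda>_. M))))) \<partial>PiM {..<n} (\<lambda>_. M))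
      \<le> ennreal (exp (l\<^sup>2 * real n * c\<^sup>2 / 8))"
proof (induction n arbitrary: f)
  case 0
  have sp: "space (PiM {..<0::nat} (\<lambda>_. M)) = {\<lambda>_. undefined}"
    by (simp add: PiM_empty)
  show ?case
    by (simp add: PiM_empty nn_integral_count_space_finite lebesgue_integral_count_space_finite)
next
  case (Suc n f)
  interpret M: prob_space M by (rule M)
  interpret P: product_prob_space "\<lambda>_. M" by unfold_locales
  define Q where "Q = PiM {..<n} (\<lambda>_. M)"
  have ins: "{..<Suc n} = insert n {..<n}" by auto
  have PS: "PiM {..<Suc n} (\<lambda>_. M) = PiM (insert n {..<n}) (\<lambda>_. M)" by (simp add: ins)
  have fm[measurable]: "f \<in> borel_measurable (PiM (insert n {..<n}) (\<lambda>_. M))"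
    using Suc.prems(1) PS by simp
  interpret Qp: prob_space Q unfolding Q_def by (intro prob_space_PiM M)
  have upd_sp: "x(n:=y) \<in> space (PiM {..<Suc n} (\<lambda>_. M))" if "x \<in> space Q" "y \<in> space M" for x y
    using that unfolding Q_def PS space_PiM by (intro PiE_fun_upd) auto
  have fxm: "(\<lambda>y. f (x(n:=y))) \<in> borel_measurable M" if "x \<in> space Q" for x
  proof -
    have "(\<lambda>y. (x, y)) \<in> measurable M (Q \<Otimes>\<^sub>M M)"
      using that by measurable
    moreover have "(\<lambda>(x, y). f (x(n:=y))) \<in> borel_measurable (Q \<Otimes>\<^sub>M M)"
      unfolding Q_def by measurable
    ultimately show ?thesis by (rule measurable_compose[where f="\<lambda>y. (x,y)" and g = "\<lambda>(x, y). f (x(n:=y))", simplified])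
  qed
  have fxi: "integrable M (\<lambda>y. f (x(n:=y)))" if "x \<in> space Q" for x
    using that fxm Suc.prems(2) upd_sp
    by (intro M.integrable_const_bound[where B=B] AE_I2) auto
  define g where "g x = (\<integral>y. f (x(n:=y)) \<partial>M)" for x
  have gm[measurable]: "g \<in> borel_measurable Q"
    unfolding g_def Q_def by measurable
  have gB: "\<bar>g x\<bar> \<le> B" if "x \<in> space Q" for x
  proof -
    have "\<bar>g x\<bar> \<le> (\<integral>y. \<bar>f (x(n:=y))\<bar> \<partial>M)" unfolding g_def by (rule integral_abs_bound)
    also have "\<dots> \<le> B"
      using that fxi upd_sp Suc.prems(2) by (intro M.integral_le_const AE_I2) auto
    finally show ?thesis .
  qed
  have gd: "\<bar>g x - g (x(i:=z))\<bar> \<le> c" if x: "x \<in> space Q" and i: "i < n" and z: "z \<in> space M" for x i z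
  proof -
    have xz: "x(i:=z) \<in> space Q" using x z i unfolding Q_def space_PiM by (auto simp: PiE_iff extensional_def)
    have "g x - g (x(i:=z)) = (\<integral>y. f (x(n:=y)) - f ((x(i:=z))(n:=y)) \<partial>M)"
      unfolding g_def using fxi[OF x] fxi[OF xz] by simp
    also have "\<bar>\<dots>\<bar> \<le> (\<integral>y. \<bar>f (x(n:=y)) - f ((x(i:=z))(n:=y))\<bar> \<partial>M)" by (rule integral_abs_bound)
    also have "\<dots> \<le> c"
    proof (intro M.integral_le_const)
      show "integrable M (\<lambda>y. \<bar>f (x(n:=y)) - f ((x(i:=z))(n:=y))\<bar>)"
        using fxi[OF x] fxi[OF xz] by auto
      show "AE y in M. \<bar>f (x(n:=y)) - f ((x(i:=z))(n:=y))\<bar> \<le> c"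
      proof (intro AE_I2)
        fix y assume y: "y \<in> space M"
        have eq: "(x(i:=z))(n:=y) = (x(n:=y))(i:=z)" using i by (auto simp: fun_eq_iff)
        have h: "\<bar>f (x(n:=y)) - f ((x(n:=y))(i:=z))\<bar> \<le> c"
          by (rule Suc.prems(3)[OF upd_sp[OF x y]]) (use i z in auto)
        show "\<bar>f (x(n:=y)) - f ((x(i:=z))(n:=y))\<bar> \<le> c"
          unfolding eq by (rule h)
      qed
    qed
    finally show ?thesis .
  qed
  have IH: "(\<integral>\<^sup>+x. ennreal (exp (l * (g x - (\<integral>x. g x \<partial>Q)))) \<partial>Q) \<le> ennreal (exp (l\<^sup>2 * real n * c\<^sup>2 / 8))"
    using Suc.IH[of g] gm gB gd unfolding Q_def by blast
  interpret PP: prob_space "PiM (insert n {..<n}) (\<lambda>_. M)" by (intro prob_space_PiM M)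
  have fint: "integrable (PiM (insert n {..<n}) (\<lambda>_. M)) f"
    using Suc.prems(2) PS by (intro PP.integrable_const_bound[where B=B] AE_I2) auto
  have Ef: "(\<integral>x. f x \<partial>PiM {..<Suc n} (\<lambda>_. M)) = (\<integral>x. g x \<partial>Q)"
    unfolding PS g_def Q_def by (rule P.product_integral_insert) (use fint in auto)
  define E where "E = (\<integral>x. g x \<partial>Q)"
  have "(\<integral>\<^sup>+x. ennreal (exp (l * (f x - (\<integral>x. f x \<partial>PiM {..<Suc n} (\<lambda>_. M))))) \<partial>PiM {..<Suc n} (\<lambda>_. M))
     = (\<integral>\<^sup>+x. (\<integral>\<^sup>+y. ennreal (exp (l * (f (x(n:=y)) - E))) \<partial>M) \<partial>Q)"
  proof -
    have Ef': "(\<integral>x. f x \<partial>PiM (insert n {..<n}) (\<lambda>_. M)) = E" using Ef unfolding PS E_def .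
    show ?thesis unfolding PS Ef' unfolding Q_def by (rule P.product_nn_integral_insert) auto
  qed
  also have "\<dots> \<le> (\<integral>\<^sup>+x. ennreal (exp (l * (g x - E))) * ennreal (exp (l\<^sup>2 * c\<^sup>2 / 8)) \<partial>Q)"
  proof (intro nn_integral_mono)
    fix x assume x: "x \<in> space Q"
    define h where "h y = f (x(n:=y))" for y
    define a where "a = Inf (h ` space M)"
    have ne: "space M \<noteq> {}" by (rule M.not_empty)
    have bb: "bdd_below (h ` space M)"
      using Suc.prems(2) upd_sp[OF x] unfolding h_def bdd_below_def
      by (intro exI[of _ "-B"]) (force simp: abs_le_iff)
    have ha: "a \<le> h y" if "y \<in> space M" for y
      unfolding a_def using bb that by (intro cInf_lower) auto
    have hb: "h y \<le> a + c" if y: "y \<in> space M" for y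
    proof -
      have "h y - c \<le> a" unfolding a_def
      proof (rule cInf_greatest)
        show "h ` space M \<noteq> {}" using ne by auto
        fix v assume "v \<in> h ` space M"
        then obtain y' where y': "y' \<in> space M" "v = h y'" by auto
        have eq: "(x(n:=y))(n:=y') = x(n:=y')" by auto
        have "\<bar>f (x(n:=y)) - f ((x(n:=y))(n:=y'))\<bar> \<le> c"
          by (rule Suc.prems(3)[OF upd_sp[OF x y]]) (use y' in auto)
        then have "\<bar>h y - h y'\<bar> \<le> c" unfolding h_def eq .
        then show "h y - c \<le> v" using y' by auto
      qed
      then show ?thesis by simp
    qed
    have hm: "h \<in> borel_measurable M" using fxm[OF x] unfolding h_def .
    have hAE: "AE y in M. h y \<in> {a..a + c}" using ha hb by (intro AE_I2) simp
    interpret H: interval_bounded_random_variable M h a "a + c"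
      by (intro interval_bounded_random_variable.intro M interval_bounded_random_variable_axioms.intro hm hAE)
    have gx: "g x = M.expectation h" unfolding g_def h_def ..
    have "(\<integral>\<^sup>+y. ennreal (exp (l * (f (x(n:=y)) - E))) \<partial>M)
        = (\<integral>\<^sup>+y. ennreal (exp (l * (g x - E))) * ennreal (exp (l * (h y - M.expectation h))) \<partial>M)"
    proof (intro nn_integral_cong)
      fix y
      have "exp (l * (f (x(n:=y)) - E)) = exp (l * (g x - E)) * exp (l * (h y - M.expectation h))"
        unfolding gx[symmetric] mult_exp_exp unfolding h_def by (simp add: algebra_simps)
      then show "ennreal (exp (l * (f (x(n:=y)) - E))) = ennreal (exp (l * (g x - E))) * ennreal (exp (l * (h y - M.expectation h)))"
        by (simp add: ennreal_mult)
    qed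
    also have "\<dots> = ennreal (exp (l * (g x - E))) * (\<integral>\<^sup>+y. ennreal (exp (l * (h y - M.expectation h))) \<partial>M)"
      by (rule nn_integral_cmult) (use fxm[OF x] in \<open>auto simp: h_def\<close>)
    also have "\<dots> \<le> ennreal (exp (l * (g x - E))) * ennreal (exp (l\<^sup>2 * (a + c - a)\<^sup>2 / 8))"
      by (intro mult_left_mono H.Hoeffdings_lemma_nn_integral l) auto
    finally show "(\<integral>\<^sup>+y. ennreal (exp (l * (f (x(n:=y)) - E))) \<partial>M) \<le> ennreal (exp (l * (g x - E))) * ennreal (exp (l\<^sup>2 * c\<^sup>2 / 8))"
      by simp
  qed
  also have "\<dots> = (\<integral>\<^sup>+x. ennreal (exp (l * (g x - E))) \<partial>Q) * ennreal (exp (l\<^sup>2 * c\<^sup>2 / 8))"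
    by (rule nn_integral_multc) auto
  also have "\<dots> \<le> ennreal (exp (l\<^sup>2 * real n * c\<^sup>2 / 8)) * ennreal (exp (l\<^sup>2 * c\<^sup>2 / 8))"
    using IH unfolding E_def by (intro mult_right_mono) auto
  also have "\<dots> = ennreal (exp (l\<^sup>2 * real (Suc n) * c\<^sup>2 / 8))"
  proof -
    have "l\<^sup>2 * real n * c\<^sup>2 / 8 + l\<^sup>2 * c\<^sup>2 / 8 = l\<^sup>2 * real (Suc n) * c\<^sup>2 / 8"
      by (simp add: distrib_left distrib_right add_divide_distrib)
    then show ?thesis by (simp add: ennreal_mult[symmetric] mult_exp_exp)
  qed
  finally show ?case .
qed

lemma mcdiarmid:
  fixes M :: "'a measure" and n :: nat
  assumes M: "prob_space M" and n: "n > 0" and c: "c > 0" and t: "t \<ge> 0"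
    and fm: "f \<in> borel_measurable (PiM {..<n} (\<lambda>_. M))"
    and fB: "\<And>x. x \<in> space (PiM {..<n} (\<lambda>_. M)) \<Longrightarrow> \<bar>f x\<bar> \<le> B"
    and fd: "\<And>x i y. x \<in> space (PiM {..<n} (\<lambda>_. M)) \<Longrightarrow> i < n \<Longrightarrow> y \<in> space M \<Longrightarrow> \<bar>f x - f (x(i:=y))\<bar> \<le> c"
  shows "measure (PiM {..<n} (\<lambda>_. M)) {x \<in> space (PiM {..<n} (\<lambda>_. M)). f x \<ge> (\<integral>x. f x \<partial>PiM {..<n} (\<lambda>_. M)) + t}
           \<le> exp (- 2 * t\<^sup>2 / (real n * c\<^sup>2))"
proof -
  define P where "P = PiM {..<n} (\<lambda>_. M)"
  interpret P: prob_space P unfolding P_def by (intro prob_space_PiM M)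
  define E where "E = (\<integral>x. f x \<partial>P)"
  show ?thesis
  proof (cases "t = 0")
    case True
    then show ?thesis unfolding P_def[symmetric] by (simp add: P.prob_le_1)
  next
    case False
    with t have t: "t > 0" by simp
    define l where "l = 4 * t / (real n * c\<^sup>2)"
    have l: "l > 0" unfolding l_def using t n c by simp
    have fm': "f \<in> borel_measurable P" using fm unfolding P_def .
    have "emeasure P {x \<in> space P. f x - E \<ge> t} \<le>
          ennreal (exp (-l * t)) * (\<integral>\<^sup>+x. ennreal (exp (l * (f x - E))) * indicator (space P) x \<partial>P)"
      by (intro Chernoff_ineq_nn_integral_ge l) (use fm' in auto)
    also have "(\<integral>\<^sup>+x. ennreal (exp (l * (f x - E))) * indicator (space P) x \<partial>P) = (\<integral>\<^sup>+x. ennreal (exp (l * (f x - E))) \<partial>P)"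
      by (intro nn_integral_cong) auto
    also have "\<dots> \<le> ennreal (exp (l\<^sup>2 * real n * c\<^sup>2 / 8))"
      unfolding E_def P_def by (rule mcdiarmid_mgf[OF M l _ fm fB fd]) (use c in auto)
    finally have "emeasure P {x \<in> space P. f x - E \<ge> t} \<le> ennreal (exp (-l * t)) * ennreal (exp (l\<^sup>2 * real n * c\<^sup>2 / 8))"
      by (simp add: mult_left_mono)
    also have "\<dots> = ennreal (exp (- 2 * t\<^sup>2 / (real n * c\<^sup>2)))"
    proof -
      have "-l * t + l\<^sup>2 * real n * c\<^sup>2 / 8 = - 2 * t\<^sup>2 / (real n * c\<^sup>2)"
        unfolding l_def using n c by (simp add: field_simps power2_eq_square)
      then show ?thesis by (simp add: ennreal_mult[symmetric] mult_exp_exp)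
    qed
    finally have "P.prob {x \<in> space P. f x - E \<ge> t} \<le> exp (- 2 * t\<^sup>2 / (real n * c\<^sup>2))"
      by (simp add: P.emeasure_eq_measure)
    moreover have "{x \<in> space P. f x - E \<ge> t} = {x \<in> space P. f x \<ge> E + t}" by auto
    ultimately show ?thesis unfolding P_def E_def by simp
  qed
qed

lemma mcdiarmid_abs:
  fixes M :: "'a measure" and n :: nat
  assumes M: "prob_space M" and n: "n > 0" and c: "c > 0" and t: "t \<ge> 0"
    and fm: "f \<in> borel_measurable (PiM {..<n} (\<lambda>_. M))"
    and fB: "\<And>x. x \<in> space (PiM {..<n} (\<lambda>_. M)) \<Longrightarrow> \<bar>f x\<bar> \<le> B"
    and fd: "\<And>x i y. x \<in> space (PiM {..<n} (\<lambda>_. M)) \<Longrightarrow> i < n \<Longrightarrow> y \<in> space M \<Longrightarrow> \<bar>f x - f (x(i:=y))\<bar> \<le> c"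
  shows "measure (PiM {..<n} (\<lambda>_. M)) {x \<in> space (PiM {..<n} (\<lambda>_. M)). \<bar>f x - (\<integral>x. f x \<partial>PiM {..<n} (\<lambda>_. M))\<bar> \<ge> t}
           \<le> 2 * exp (- 2 * t\<^sup>2 / (real n * c\<^sup>2))"
proof -
  define P where "P = PiM {..<n} (\<lambda>_. M)"
  interpret P: prob_space P unfolding P_def by (intro prob_space_PiM M)
  define E where "E = (\<integral>x. f x \<partial>P)"
  have fm': "f \<in> borel_measurable P" using fm unfolding P_def .
  have 1: "P.prob {x \<in> space P. f x \<ge> E + t} \<le> exp (- 2 * t\<^sup>2 / (real n * c\<^sup>2))"
    unfolding P_def E_def by (rule mcdiarmid[OF M n c t fm fB fd])
  have 2: "P.prob {x \<in> space P. - f x \<ge> (\<integral>x. - f x \<partial>P) + t} \<le> exp (- 2 * t\<^sup>2 / (real n * c\<^sup>2))"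
    unfolding P_def
  proof (rule mcdiarmid[OF M n c t])
    show "(\<lambda>x. - f x) \<in> borel_measurable (PiM {..<n} (\<lambda>_. M))" using fm by measurable
  qed (use fB fd in \<open>auto simp: abs_minus_commute\<close>)
  have "{x \<in> space P. \<bar>f x - E\<bar> \<ge> t} = {x \<in> space P. f x \<ge> E + t} \<union> {x \<in> space P. - f x \<ge> (\<integral>x. - f x \<partial>P) + t}"
    by (auto simp: E_def)
  also have "P.prob \<dots> \<le> P.prob {x \<in> space P. f x \<ge> E + t} + P.prob {x \<in> space P. - f x \<ge> (\<integral>x. - f x \<partial>P) + t}"
    by (intro measure_Un_le) (use fm' in auto)
  finally show ?thesis using 1 2 unfolding P_def E_def by simp
qed



lemma sq_le_of_abs_le: "\<bar>a::real\<bar> \<le> b \<Longrightarrow> a\<^sup>2 \<le> b\<^sup>2"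
  by (metis power2_abs power_mono abs_ge_zero)

lemma sum_sq_PiM:
  fixes M :: "'a measure" and n :: nat and \<psi> :: "'a \<Rightarrow> real"
  assumes M: "prob_space M" and \<psi>m[measurable]: "\<psi> \<in> borel_measurable M"
    and \<psi>B: "\<And>z. z \<in> space M \<Longrightarrow> \<bar>\<psi> z\<bar> \<le> K" and \<psi>0: "(\<integral>z. \<psi> z \<partial>M) = 0"
  shows "(\<integral>x. (\<Sum>i<n. \<psi> (x i))\<^sup>2 \<partial>PiM {..<n} (\<lambda>_. M)) = real n * (\<integral>z. (\<psi> z)\<^sup>2 \<partial>M)"
proof (induction n)
  case 0
  then show ?case by (simp add: PiM_empty lebesgue_integral_count_space_finite)
next
  case (Suc n)
  interpret M: prob_space M by (rule M)
  interpret P: product_prob_space "\<lambda>_. M" by unfold_locales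
  interpret PP: prob_space "PiM (insert n {..<n}) (\<lambda>_. M)" by (intro prob_space_PiM M)
  define Q where "Q = PiM {..<n} (\<lambda>_. M)"
  interpret Qp: prob_space Q unfolding Q_def by (intro prob_space_PiM M)
  have ins: "{..<Suc n} = insert n {..<n}" by auto
  have PS: "PiM {..<Suc n} (\<lambda>_. M) = PiM (insert n {..<n}) (\<lambda>_. M)" by (simp add: ins)
  have K: "K \<ge> 0" using \<psi>B M.not_empty by (meson abs_ge_zero all_not_in_conv order_trans)
  have \<psi>i: "integrable M \<psi>" by (intro M.integrable_const_bound[where B=K] AE_I2) (use \<psi>B in auto)
  have \<psi>2i: "integrable M (\<lambda>z. (\<psi> z)\<^sup>2)"
  proof (intro M.integrable_const_bound[where B="K\<^sup>2"] AE_I2)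
    fix z assume "z \<in> space M"
    then have "\<bar>\<psi> z\<bar> \<le> K" by (rule \<psi>B)
    then show "norm ((\<psi> z)\<^sup>2) \<le> K\<^sup>2" by (simp add: sq_le_of_abs_le)
  qed auto
  have sB: "\<bar>\<Sum>i\<in>I. \<psi> (x i)\<bar> \<le> real (card I) * K" if "x \<in> space (PiM J (\<lambda>_. M))" "I \<subseteq> J" "finite I" for x I J
  proof -
    have "\<bar>\<Sum>i\<in>I. \<psi> (x i)\<bar> \<le> (\<Sum>i\<in>I. \<bar>\<psi> (x i)\<bar>)" by (rule sum_abs)
    also have "\<dots> \<le> (\<Sum>i\<in>I. K)" using that by (intro sum_mono \<psi>B) (auto simp: space_PiM PiE_iff)
    finally show ?thesis by simp
  qed
  have Fi: "integrable (PiM (insert n {..<n}) (\<lambda>_. M)) (\<lambda>x. (\<Sum>i<Suc n. \<psi> (x i))\<^sup>2)"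
  proof (intro PP.integrable_const_bound[where B="(real (Suc n) * K)\<^sup>2"] AE_I2)
    fix x assume x: "x \<in> space (PiM (insert n {..<n}) (\<lambda>_. M))"
    have "\<bar>\<Sum>i<Suc n. \<psi> (x i)\<bar> \<le> real (card {..<Suc n}) * K" by (rule sB[OF x]) (auto simp: ins)
    then show "norm ((\<Sum>i<Suc n. \<psi> (x i))\<^sup>2) \<le> (real (Suc n) * K)\<^sup>2"
      by (simp add: sq_le_of_abs_le del: of_nat_Suc)
  qed (unfold ins[symmetric], measurable)
  have Si: "integrable Q (\<lambda>x. (\<Sum>i<n. \<psi> (x i))\<^sup>2)"
  proof (intro Qp.integrable_const_bound[where B="(real n * K)\<^sup>2"] AE_I2)
    fix x assume x: "x \<in> space Q"
    have "\<bar>\<Sum>i<n. \<psi> (x i)\<bar> \<le> real (card {..<n}) * K" by (rule sB[OF x[unfolded Q_def]]) auto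
    then show "norm ((\<Sum>i<n. \<psi> (x i))\<^sup>2) \<le> (real n * K)\<^sup>2"
      by (simp add: sq_le_of_abs_le)
  qed (unfold Q_def, measurable)
  have "(\<integral>x. (\<Sum>i<Suc n. \<psi> (x i))\<^sup>2 \<partial>PiM {..<Suc n} (\<lambda>_. M))
      = (\<integral>x. (\<integral>y. (\<Sum>i<Suc n. \<psi> ((x(n:=y)) i))\<^sup>2 \<partial>M) \<partial>Q)"
    unfolding PS Q_def by (rule P.product_integral_insert[OF _ _ Fi]) auto
  also have "\<dots> = (\<integral>x. (\<Sum>i<n. \<psi> (x i))\<^sup>2 + (\<integral>z. (\<psi> z)\<^sup>2 \<partial>M) \<partial>Q)"
  proof (intro Bochner_Integration.integral_cong refl)
    fix x assume x: "x \<in> space Q"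
    define S where "S = (\<Sum>i<n. \<psi> (x i))"
    have "(\<lambda>y. (\<Sum>i<Suc n. \<psi> ((x(n:=y)) i))\<^sup>2) = (\<lambda>y. S\<^sup>2 + 2 * S * \<psi> y + (\<psi> y)\<^sup>2)"
      by (auto simp: S_def power2_eq_square algebra_simps)
    then have "(\<integral>y. (\<Sum>i<Suc n. \<psi> ((x(n:=y)) i))\<^sup>2 \<partial>M) = (\<integral>y. S\<^sup>2 + 2 * S * \<psi> y + (\<psi> y)\<^sup>2 \<partial>M)" by simp
    also have "\<dots> = S\<^sup>2 + 2 * S * (\<integral>y. \<psi> y \<partial>M) + (\<integral>y. (\<psi> y)\<^sup>2 \<partial>M)"
      using \<psi>i \<psi>2i by (simp add: M.prob_space)
    finally show "(\<integral>y. (\<Sum>i<Suc n. \<psi> ((x(n:=y)) i))\<^sup>2 \<partial>M) = (\<Sum>i<n. \<psi> (x i))\<^sup>2 + (\<integral>z. (\<psi> z)\<^sup>2 \<partial>M)"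
      using \<psi>0 by (simp add: S_def)
  qed
  also have "\<dots> = (\<integral>x. (\<Sum>i<n. \<psi> (x i))\<^sup>2 \<partial>Q) + (\<integral>z. (\<psi> z)\<^sup>2 \<partial>M)"
    using Si by (simp add: Qp.prob_space)
  also have "\<dots> = real (Suc n) * (\<integral>z. (\<psi> z)\<^sup>2 \<partial>M)"
    using Suc.IH unfolding Q_def by (simp add: algebra_simps)
  finally show ?case .
qed



definition dev :: "'b measure \<Rightarrow> nat \<Rightarrow> ('b \<Rightarrow> real) \<Rightarrow> (nat \<Rightarrow> 'b) \<Rightarrow> real" where
  "dev M m \<phi> S = (\<Sum>i<m. \<phi> (S i)) / real m - (\<integral>z. \<phi> z \<partial>M)"

lemma dev_add: "integrable M f \<Longrightarrow> integrable M g \<Longrightarrow> dev M m (\<lambda>z. f z + g z) S = dev M m f S + dev M m g S"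
  unfolding dev_def by (simp add: sum.distrib add_divide_distrib)

lemma dev_diff: "integrable M f \<Longrightarrow> integrable M g \<Longrightarrow> dev M m (\<lambda>z. f z - g z) S = dev M m f S - dev M m g S"
  unfolding dev_def by (simp add: sum_subtractf diff_divide_distrib)

lemma dev_cmult: "dev M m (\<lambda>z. c * f z) S = c * dev M m f S"
  unfolding dev_def by (simp add: sum_distrib_left[symmetric] right_diff_distrib)

lemma dev_sum: "finite A \<Longrightarrow> (\<And>a. a \<in> A \<Longrightarrow> integrable M (f a)) \<Longrightarrow>
   dev M m (\<lambda>z. \<Sum>a\<in>A. f a z) S = (\<Sum>a\<in>A. dev M m (f a) S)"
proof -
  assume A: "finite A" and i: "\<And>a. a \<in> A \<Longrightarrow> integrable M (f a)"
  have "(\<Sum>i<m. \<Sum>a\<in>A. f a (S i)) = (\<Sum>a\<in>A. \<Sum>i<m. f a (S i))" by (rule sum.swap)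
  then show ?thesis unfolding dev_def using i by (simp add: sum_subtractf sum_divide_distrib)
qed

lemma int_coord:
  fixes M :: "'a measure" and \<phi> :: "'a \<Rightarrow> real"
  assumes M: "prob_space M" and i: "i < m" and [measurable]: "\<phi> \<in> borel_measurable M"
  shows "(\<integral>x. \<phi> (x i) \<partial>PiM {..<m} (\<lambda>_. M)) = (\<integral>z. \<phi> z \<partial>M)"
proof -
  have "distr (PiM {..<m} (\<lambda>_. M)) M (\<lambda>x. x i) = M"
    by (rule distr_PiM_component) (use M i in auto)
  then have "(\<integral>z. \<phi> z \<partial>M) = (\<integral>z. \<phi> z \<partial>distr (PiM {..<m} (\<lambda>_. M)) M (\<lambda>x. x i))" by simp
  also have "\<dots> = (\<integral>x. \<phi> (x i) \<partial>PiM {..<m} (\<lambda>_. M))"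
    using integral_distr[of "\<lambda>x. x i" "PiM {..<m} (\<lambda>_. M)" M \<phi>] i by simp
  finally show ?thesis by simp
qed

lemma bounded_integrable:
  fixes f :: "'a \<Rightarrow> real"
  assumes "prob_space M" "f \<in> borel_measurable M" "\<And>z. z \<in> space M \<Longrightarrow> \<bar>f z\<bar> \<le> B"
  shows "integrable M f"
proof -
  interpret prob_space M by fact
  show ?thesis by (intro integrable_const_bound[where B=B] AE_I2) (use assms in auto)
qed

lemma dev_measurable[measurable]:
  assumes [measurable]: "\<phi> \<in> borel_measurable M"
  shows "dev M m \<phi> \<in> borel_measurable (PiM {..<m} (\<lambda>_. M))"
  unfolding dev_def by measurable

lemma sum_coord_bound:
  assumes S: "S \<in> space (PiM {..<m} (\<lambda>_. M))" and B: "\<And>z. z \<in> space M \<Longrightarrow> \<bar>\<phi> z\<bar> \<le> K"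
  shows "\<bar>\<Sum>i<m. \<phi> (S i)\<bar> \<le> real m * K"
proof -
  have "\<bar>\<Sum>i<m. \<phi> (S i)\<bar> \<le> (\<Sum>i<m. \<bar>\<phi> (S i)\<bar>)" by (rule sum_abs)
  also have "\<dots> \<le> (\<Sum>i<m. K)"
  proof (rule sum_mono)
    fix i assume "i \<in> {..<m}"
    then have "S i \<in> space M" using S by (simp add: space_PiM PiE_iff)
    then show "\<bar>\<phi> (S i)\<bar> \<le> K" by (rule B)
  qed
  finally show ?thesis by simp
qed

lemma dev_bound:
  assumes m: "m > 0" and M: "prob_space M" and \<phi>m: "\<phi> \<in> borel_measurable M" and B: "\<And>z. z \<in> space M \<Longrightarrow> \<bar>\<phi> z\<bar> \<le> 1"
    and S: "S \<in> space (PiM {..<m} (\<lambda>_. M))"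
  shows "\<bar>dev M m \<phi> S\<bar> \<le> 2"
proof -
  interpret prob_space M by fact
  have "\<bar>\<Sum>i<m. \<phi> (S i)\<bar> \<le> real m * 1" by (rule sum_coord_bound[OF S B])
  then have 1: "\<bar>(\<Sum>i<m. \<phi> (S i)) / real m\<bar> \<le> 1" using m by (subst abs_divide) (simp add: pos_divide_le_eq)
  have i: "integrable M \<phi>" by (rule bounded_integrable[OF M \<phi>m B])
  have "\<bar>\<integral>z. \<phi> z \<partial>M\<bar> \<le> (\<integral>z. \<bar>\<phi> z\<bar> \<partial>M)" by (rule integral_abs_bound)
  also have "\<dots> \<le> 1"
    using i B by (intro integral_le_const AE_I2) auto
  finally show ?thesis using 1 unfolding dev_def by linarith
qed

lemma dev_upd:
  assumes "i < m"
  shows "dev M m \<phi> (S(i:=y)) = dev M m \<phi> S + (\<phi> y - \<phi> (S i)) / real m"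
proof -
  have "(\<Sum>j<m. \<phi> ((S(i:=y)) j)) = (\<Sum>j<m. \<phi> (S j)) + (\<phi> y - \<phi> (S i))"
  proof -
    have "(\<Sum>j<m. \<phi> ((S(i:=y)) j)) = (\<Sum>j\<in>insert i ({..<m} - {i}). \<phi> ((S(i:=y)) j))"
      using assms by (intro sum.cong) auto
    also have "\<dots> = \<phi> y + (\<Sum>j\<in>{..<m} - {i}. \<phi> (S j))" by (subst sum.insert) auto
    also have "(\<Sum>j<m. \<phi> (S j)) = \<phi> (S i) + (\<Sum>j\<in>{..<m} - {i}. \<phi> (S j))"
      using assms by (subst sum.remove[of _ i]) auto
    ultimately show ?thesis by simp
  qed
  then show ?thesis unfolding dev_def by (simp add: add_divide_distrib diff_divide_distrib)
qed

lemma dev_tail: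
  fixes M :: "'a measure"
  assumes M: "prob_space M" and m: "m > 0" and t: "t \<ge> 0" and [measurable]: "\<phi> \<in> borel_measurable M"
    and B: "\<And>z. z \<in> space M \<Longrightarrow> \<bar>\<phi> z\<bar> \<le> 1"
  shows "measure (PiM {..<m} (\<lambda>_. M)) {S \<in> space (PiM {..<m} (\<lambda>_. M)). \<bar>dev M m \<phi> S\<bar> \<ge> t}
          \<le> 2 * exp (- real m * t\<^sup>2 / 2)"
proof -
  define f where "f S = (\<Sum>i<m. \<phi> (S i)) / real m" for S
  have fm: "f \<in> borel_measurable (PiM {..<m} (\<lambda>_. M))" unfolding f_def by measurable
  have \<phi>i: "integrable M \<phi>" by (rule bounded_integrable[OF M _ B]) simp
  interpret P: prob_space "PiM {..<m} (\<lambda>_. M)" by (intro prob_space_PiM M)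
  have Ef: "(\<integral>S. f S \<partial>PiM {..<m} (\<lambda>_. M)) = (\<integral>z. \<phi> z \<partial>M)"
  proof -
    have ints: "integrable (PiM {..<m} (\<lambda>_. M)) (\<lambda>S. \<phi> (S i))" if i: "i \<in> {..<m}" for i
      by (intro bounded_integrable[where B=1] prob_space_PiM M) (use i B in \<open>auto simp: space_PiM PiE_iff\<close>)
    have "(\<integral>S. f S \<partial>PiM {..<m} (\<lambda>_. M)) = (\<integral>S. (\<Sum>i<m. \<phi> (S i)) \<partial>PiM {..<m} (\<lambda>_. M)) / real m"
      unfolding f_def by (rule integral_divide_zero)
    also have "(\<integral>S. (\<Sum>i<m. \<phi> (S i)) \<partial>PiM {..<m} (\<lambda>_. M)) = (\<Sum>i<m. (\<integral>S. \<phi> (S i) \<partial>PiM {..<m} (\<lambda>_. M)))"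
      by (rule Bochner_Integration.integral_sum) (rule ints)
    also have "\<dots> = (\<Sum>i<m. (\<integral>z. \<phi> z \<partial>M))" by (simp add: int_coord[OF M])
    finally show ?thesis using m by simp
  qed
  have fB: "\<bar>f S\<bar> \<le> 1" if "S \<in> space (PiM {..<m} (\<lambda>_. M))" for S
  proof -
    have "\<bar>\<Sum>i<m. \<phi> (S i)\<bar> \<le> (\<Sum>i<m. 1)"
      using that B by (intro order_trans[OF sum_abs] sum_mono) (auto simp: space_PiM PiE_iff)
    then show ?thesis using m unfolding f_def by (subst abs_divide) (simp add: pos_divide_le_eq)
  qed
  have fd: "\<bar>f S - f (S(i:=y))\<bar> \<le> 2 / real m"
    if "S \<in> space (PiM {..<m} (\<lambda>_. M))" "i < m" "y \<in> space M" for S i y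
  proof -
    have "f (S(i:=y)) = f S + (\<phi> y - \<phi> (S i)) / real m"
      using dev_upd[OF that(2), of M \<phi> S y] unfolding dev_def f_def by simp
    moreover have d2: "\<bar>\<phi> y - \<phi> (S i)\<bar> \<le> 2" using B[OF that(3)] B[of "S i"] that by (auto simp: space_PiM PiE_iff)
    ultimately have "\<bar>f S - f (S(i:=y))\<bar> = \<bar>\<phi> y - \<phi> (S i)\<bar> / real m"
      by (simp add: abs_divide abs_minus_commute)
    also have "\<dots> \<le> 2 / real m" using d2 by (intro divide_right_mono) auto
    finally show ?thesis .
  qed
  have mc: "measure (PiM {..<m} (\<lambda>_. M)) {S \<in> space (PiM {..<m} (\<lambda>_. M)). \<bar>f S - (\<integral>S. f S \<partial>PiM {..<m} (\<lambda>_. M))\<bar> \<ge> t}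
         \<le> 2 * exp (- 2 * t\<^sup>2 / (real m * (2 / real m)\<^sup>2))"
    by (rule mcdiarmid_abs[OF M m _ t fm fB fd]) (use m in auto)
  have e: "- 2 * t\<^sup>2 / (real m * (2 / real m)\<^sup>2) = - real m * t\<^sup>2 / 2"
    using m by (simp add: field_simps power2_eq_square)
  have d: "dev M m \<phi> S = f S - (\<integral>S. f S \<partial>PiM {..<m} (\<lambda>_. M))" for S
    unfolding Ef dev_def by (simp add: f_def)
  show ?thesis using mc unfolding e d .
qed

lemma dev_sq:
  fixes M :: "'a measure"
  assumes M: "prob_space M" and m: "m > 0" and [measurable]: "\<phi> \<in> borel_measurable M"
    and B: "\<And>z. z \<in> space M \<Longrightarrow> \<bar>\<phi> z\<bar> \<le> 1"
  shows "(\<integral>S. (dev M m \<phi> S)\<^sup>2 \<partial>PiM {..<m} (\<lambda>_. M)) \<le> (\<integral>z. (\<phi> z)\<^sup>2 \<partial>M) / real m"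
proof -
  interpret M: prob_space M by (rule M)
  define \<mu> where "\<mu> = (\<integral>z. \<phi> z \<partial>M)"
  have \<phi>i: "integrable M \<phi>" by (rule bounded_integrable[OF M _ B]) simp
  have \<phi>2i: "integrable M (\<lambda>z. (\<phi> z)\<^sup>2)"
  proof (rule bounded_integrable[OF M, where B=1])
    fix z assume "z \<in> space M"
    then have "\<bar>\<phi> z\<bar> \<le> 1" by (rule B)
    then have "(\<phi> z)\<^sup>2 \<le> 1\<^sup>2" by (rule sq_le_of_abs_le)
    then show "\<bar>(\<phi> z)\<^sup>2\<bar> \<le> 1" by simp
  qed simp
  have \<mu>B: "\<bar>\<mu>\<bar> \<le> 1"
  proof -
    have "\<bar>\<mu>\<bar> \<le> (\<integral>z. \<bar>\<phi> z\<bar> \<partial>M)" unfolding \<mu>_def by (rule integral_abs_bound)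
    also have "\<dots> \<le> 1" using B \<phi>i by (intro M.integral_le_const AE_I2) auto
    finally show ?thesis .
  qed
  define \<psi> where "\<psi> z = \<phi> z - \<mu>" for z
  have \<psi>m: "\<psi> \<in> borel_measurable M" unfolding \<psi>_def[abs_def] by measurable
  have \<psi>0: "(\<integral>z. \<psi> z \<partial>M) = 0" unfolding \<psi>_def \<mu>_def using \<phi>i by (simp add: M.prob_space)
  have \<psi>B: "\<bar>\<psi> z\<bar> \<le> 2" if "z \<in> space M" for z using B[OF that] \<mu>B unfolding \<psi>_def by linarith
  have eq: "dev M m \<phi> S = (\<Sum>i<m. \<psi> (S i)) / real m" for S
    unfolding dev_def \<psi>_def \<mu>_def[symmetric] using m by (simp add: sum_subtractf diff_divide_distrib)
  have "(\<integral>S. (dev M m \<phi> S)\<^sup>2 \<partial>PiM {..<m} (\<lambda>_. M)) = (\<integral>S. (\<Sum>i<m. \<psi> (S i))\<^sup>2 \<partial>PiM {..<m} (\<lambda>_. M)) / (real m)\<^sup>2"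
    unfolding eq by (simp add: power_divide)
  also have "\<dots> = real m * (\<integral>z. (\<psi> z)\<^sup>2 \<partial>M) / (real m)\<^sup>2"
    by (simp add: sum_sq_PiM[OF M \<psi>m \<psi>B \<psi>0])
  also have "\<dots> = (\<integral>z. (\<psi> z)\<^sup>2 \<partial>M) / real m" using m by (simp add: power2_eq_square)
  also have "(\<integral>z. (\<psi> z)\<^sup>2 \<partial>M) = (\<integral>z. (\<phi> z)\<^sup>2 \<partial>M) - \<mu>\<^sup>2"
  proof -
    have "(\<lambda>z. (\<psi> z)\<^sup>2) = (\<lambda>z. (\<phi> z)\<^sup>2 - 2 * \<mu> * \<phi> z + \<mu>\<^sup>2)"
      by (auto simp: \<psi>_def power2_eq_square algebra_simps)
    then show ?thesis using \<phi>i \<phi>2i by (simp add: M.prob_space \<mu>_def power2_eq_square)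
  qed
  also have "(\<dots>) / real m \<le> (\<integral>z. (\<phi> z)\<^sup>2 \<partial>M) / real m"
    using m by (intro divide_right_mono) auto
  finally show ?thesis .
qed

lemma (in prob_space) integral_le_sqrt_sq:
  fixes f :: "'a \<Rightarrow> real"
  assumes "integrable M f" "integrable M (\<lambda>x. (f x)\<^sup>2)"
  shows "(\<integral>x. f x \<partial>M) \<le> sqrt (\<integral>x. (f x)\<^sup>2 \<partial>M)"
proof -
  have "0 \<le> variance f" by (rule variance_positive)
  then have "(expectation f)\<^sup>2 \<le> expectation (\<lambda>x. (f x)\<^sup>2)" using variance_eq[OF assms] by simp
  then show ?thesis by (meson real_le_rsqrt abs_le_square_iff abs_ge_self order_trans real_sqrt_abs real_sqrt_le_mono)
qed



lemma fst_bm[measurable]: "fst \<in> measurable (borel :: ((real^'d) \<times> real) measure) borel"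
  by (intro borel_measurable_continuous_onI continuous_intros)
lemma snd_bm[measurable]: "snd \<in> measurable (borel :: ((real^'d) \<times> real) measure) borel"
  by (intro borel_measurable_continuous_onI continuous_intros)
lemma vec_nth_bm[measurable]: "(\<lambda>x::real^'d. x $ j) \<in> borel_measurable borel"
  by (intro borel_measurable_continuous_onI continuous_intros)

lemma inner_le_norm1:
  fixes w x :: "real^'d"
  assumes "\<forall>i. \<bar>x $ i\<bar> \<le> 1"
  shows "\<bar>w \<bullet> x\<bar> \<le> norm1 w"
proof -
  have "\<bar>w \<bullet> x\<bar> = \<bar>\<Sum>i\<in>UNIV. w $ i * x $ i\<bar>" by (simp add: inner_vec_def)
  also have "\<dots> \<le> (\<Sum>i\<in>UNIV. \<bar>w $ i * x $ i\<bar>)" by (rule sum_abs)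
  also have "\<dots> \<le> (\<Sum>i\<in>UNIV. \<bar>w $ i\<bar>)"
  proof (rule sum_mono)
    fix i :: 'd
    have "\<bar>w $ i\<bar> * \<bar>x $ i\<bar> \<le> \<bar>w $ i\<bar> * 1" using assms by (intro mult_left_mono) auto
    then show "\<bar>w $ i * x $ i\<bar> \<le> \<bar>w $ i\<bar>" by (simp add: abs_mult)
  qed
  finally show ?thesis by (simp add: norm1_def)
qed

lemma population:
  fixes D :: "((real^'d) \<times> real) measure" and \<sigma> :: real and wstar :: "real^'d"
  assumes prob: "prob_space D"
    and sets_D[measurable_cong]: "sets D = sets borel"
    and bdd: "AE z in D. (\<forall>i. \<bar>fst z $ i\<bar> \<le> 1) \<and> \<bar>snd z\<bar> \<le> 1"
    and noise_mean: "AE z in D. real_cond_exp D (vimage_algebra (space D) fst borel)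
                        (\<lambda>z. snd z - wstar \<bullet> fst z) z = 0"
    and noise_var: "AE z in D. real_cond_exp D (vimage_algebra (space D) fst borel)
                        (\<lambda>z. (snd z - wstar \<bullet> fst z)^2) z = \<sigma>^2"
  shows "(\<integral>z. (wstar \<bullet> fst z - snd z)\<^sup>2 \<partial>D) = \<sigma>\<^sup>2"
    and "\<sigma>\<^sup>2 \<le> (\<integral>z. (w \<bullet> fst z - snd z)\<^sup>2 \<partial>D)"
proof -
  interpret D: prob_space D by (rule prob)
  define F where "F = vimage_algebra (space D) fst (borel :: (real^'d) measure)"
  have fstD: "fst \<in> measurable D borel" by measurable
  have subalg: "subalgebra D F"
    unfolding subalgebra_def F_def
  proof (intro conjI subsetI)
    show "space (vimage_algebra (space D) fst borel) = space D" by simp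
  next
    fix A assume "A \<in> sets (vimage_algebra (space D) fst (borel :: (real^'d) measure))"
    then obtain B where "B \<in> sets (borel :: (real^'d) measure)" "A = fst -` B \<inter> space D"
      by (auto simp: sets_vimage_algebra2)
    then show "A \<in> sets D" using fstD by (auto intro: measurable_sets)
  qed
  interpret F: finite_measure_subalgebra D F by unfold_locales (rule subalg)
  have fstF: "fst \<in> measurable F borel" unfolding F_def by (rule measurable_vimage_algebra1) simp
  define e where "e z = snd z - wstar \<bullet> fst z" for z :: "(real^'d) \<times> real"
  have em[measurable]: "e \<in> borel_measurable D" unfolding e_def[abs_def] by measurable
  have bnd: "\<bar>v \<bullet> fst z - snd z\<bar> \<le> norm1 v + 1" if "(\<forall>i. \<bar>fst z $ i\<bar> \<le> 1) \<and> \<bar>snd z\<bar> \<le> 1" for v z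
  proof -
    have "\<bar>v \<bullet> fst z\<bar> \<le> norm1 v" using inner_le_norm1[of "fst z" v] that by blast
    then show ?thesis using that by linarith
  qed
  have int_sq: "integrable D (\<lambda>z. (v \<bullet> fst z - snd z)\<^sup>2)" for v
  proof (rule D.integrable_const_bound[where B="(norm1 v + 1)\<^sup>2"])
    show "AE x in D. norm ((v \<bullet> fst x - snd x)\<^sup>2) \<le> (norm1 v + 1)\<^sup>2"
      using bdd by eventually_elim (simp add: bnd sq_le_of_abs_le)
  qed measurable
  have int_lin: "integrable D (\<lambda>z. v \<bullet> fst z - snd z)" for v
  proof (rule D.integrable_const_bound[where B="norm1 v + 1"])
    show "AE x in D. norm (v \<bullet> fst x - snd x) \<le> norm1 v + 1"
      using bdd by eventually_elim (use bnd in auto)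
  qed measurable
  have e_sq: "(\<lambda>z. (e z)\<^sup>2) = (\<lambda>z. (wstar \<bullet> fst z - snd z)\<^sup>2)"
    by (auto simp: e_def power2_commute)
  have ie2: "integrable D (\<lambda>z. (e z)\<^sup>2)" unfolding e_sq by (rule int_sq)
  have ie: "integrable D e"
  proof -
    have "e = (\<lambda>z. - (wstar \<bullet> fst z - snd z))" by (auto simp: e_def fun_eq_iff)
    moreover have "integrable D (\<lambda>z. - (wstar \<bullet> fst z - snd z))"
      using int_lin[of wstar] by (rule integrable_minus)
    ultimately show ?thesis by simp
  qed
  have 1: "(\<integral>z. (e z)\<^sup>2 \<partial>D) = \<sigma>\<^sup>2"
  proof -
    have "(\<integral>z. (e z)\<^sup>2 \<partial>D) = (\<integral>z. real_cond_exp D F (\<lambda>z. (e z)\<^sup>2) z \<partial>D)"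
      using F.real_cond_exp_int(2)[OF ie2] by simp
    also have "\<dots> = (\<integral>z. \<sigma>\<^sup>2 \<partial>D)"
      by (rule integral_cong_AE) (use noise_var in \<open>auto simp: F_def e_def\<close>)
    also have "\<dots> = \<sigma>\<^sup>2" by (simp add: D.prob_space)
    finally show ?thesis .
  qed
  then show "(\<integral>z. (wstar \<bullet> fst z - snd z)\<^sup>2 \<partial>D) = \<sigma>\<^sup>2" using e_sq by simp
  define d where "d z = (wstar - w) \<bullet> fst z" for z :: "(real^'d) \<times> real"
  have dF: "d \<in> borel_measurable F"
  proof -
    have "(\<lambda>x::real^'d. (wstar - w) \<bullet> x) \<in> borel_measurable borel"
      by (intro borel_measurable_continuous_onI continuous_intros)
    from measurable_compose[OF fstF this] show ?thesis unfolding d_def by simp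
  qed
  have dm[measurable]: "d \<in> borel_measurable D" unfolding d_def[abs_def] by measurable
  have id2: "integrable D (\<lambda>z. (d z)\<^sup>2)"
  proof -
    have "(\<lambda>z. (d z)\<^sup>2) = (\<lambda>z. ((w - wstar) \<bullet> fst z - 0)\<^sup>2)"
      by (auto simp: d_def fun_eq_iff inner_diff_left power2_commute algebra_simps)
    moreover have "integrable D (\<lambda>z. ((w - wstar) \<bullet> fst z - 0)\<^sup>2)"
    proof (rule D.integrable_const_bound[where B="(norm1 (w - wstar) + 1)\<^sup>2"])
      show "AE x in D. norm (((w - wstar) \<bullet> fst x - 0)\<^sup>2) \<le> (norm1 (w - wstar) + 1)\<^sup>2"
        using bdd
      proof eventually_elim
        case (elim x)
        have "\<bar>(w - wstar) \<bullet> fst x - 0\<bar> \<le> norm1 (w - wstar) + 1"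
          using inner_le_norm1[of "fst x" "w - wstar"] elim by simp
        then show ?case using sq_le_of_abs_le by simp
      qed
    qed measurable
    ultimately show ?thesis by simp
  qed
  have ide: "integrable D (\<lambda>z. d z * e z)"
  proof (rule D.integrable_const_bound[where B="norm1 (wstar - w) * (norm1 wstar + 1)"])
    show "AE x in D. norm (d x * e x) \<le> norm1 (wstar - w) * (norm1 wstar + 1)"
      using bdd
    proof eventually_elim
      case (elim x)
      have a: "\<bar>d x\<bar> \<le> norm1 (wstar - w)" unfolding d_def using inner_le_norm1[of "fst x"] elim by simp
      have b: "\<bar>e x\<bar> \<le> norm1 wstar + 1" unfolding e_def using bnd[of x wstar] elim by (simp add: abs_minus_commute)
      show ?case by (simp add: abs_mult) (intro mult_mono a b, auto simp: norm1_def sum_nonneg)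
    qed
  qed measurable
  have cross: "(\<integral>z. d z * e z \<partial>D) = 0"
  proof -
    have "(\<integral>z. d z * e z \<partial>D) = (\<integral>z. d z * real_cond_exp D F e z \<partial>D)"
      using F.real_cond_exp_intg(2)[OF ide dF em] by simp
    also have "\<dots> = (\<integral>z. 0 \<partial>D)"
      by (rule integral_cong_AE) (use noise_mean in \<open>auto simp: F_def e_def[abs_def]\<close>)
    finally show ?thesis by simp
  qed
  have eq: "(\<lambda>z. (w \<bullet> fst z - snd z)\<^sup>2) = (\<lambda>z. (d z)\<^sup>2 + 2 * (d z * e z) + (e z)\<^sup>2)"
    by (auto simp: fun_eq_iff d_def e_def inner_diff_left power2_eq_square algebra_simps)
  have "(\<integral>z. (w \<bullet> fst z - snd z)\<^sup>2 \<partial>D) = (\<integral>z. (d z)\<^sup>2 \<partial>D) + 2 * (\<integral>z. d z * e z \<partial>D) + (\<integral>z. (e z)\<^sup>2 \<partial>D)"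
    unfolding eq using id2 ide ie2 by simp
  also have "\<dots> = (\<integral>z. (d z)\<^sup>2 \<partial>D) + \<sigma>\<^sup>2" using cross 1 by simp
  also have "\<dots> \<ge> \<sigma>\<^sup>2" by (simp add: integral_nonneg_AE)
  finally show "\<sigma>\<^sup>2 \<le> (\<integral>z. (w \<bullet> fst z - snd z)\<^sup>2 \<partial>D)" .
qed



lemma bounded_integrable':
  fixes f :: "'a \<Rightarrow> real"
  assumes "prob_space M" "f \<in> borel_measurable M" "\<And>z. z \<in> space M \<Longrightarrow> \<bar>f z\<bar> \<le> B"
  shows "integrable M f"
  using bounded_integrable[OF assms] .

lemma gap_identity:
  fixes cx :: "'b \<Rightarrow> 'd::finite \<Rightarrow> real" and cy :: "'b \<Rightarrow> real" and w :: "real^'d"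
  assumes M: "prob_space M"
    and cxm: "\<And>j. (\<lambda>z. cx z j) \<in> borel_measurable M" and cym: "cy \<in> borel_measurable M"
    and cxB: "\<And>z j. z \<in> space M \<Longrightarrow> \<bar>cx z j\<bar> \<le> 1" and cyB: "\<And>z. z \<in> space M \<Longrightarrow> \<bar>cy z\<bar> \<le> 1"
  shows "dev M m (\<lambda>z. ((\<Sum>j\<in>UNIV. w$j * cx z j) - cy z)\<^sup>2) S =
     (\<Sum>j\<in>UNIV. \<Sum>k\<in>UNIV. w$j * w$k * dev M m (\<lambda>z. cx z j * cx z k) S)
     - 2 * (\<Sum>j\<in>UNIV. w$j * dev M m (\<lambda>z. cx z j * cy z) S) + dev M m (\<lambda>z. (cy z)\<^sup>2) S"
proof -
  note [measurable] = cxm cym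
  have i1: "integrable M (\<lambda>z. cx z j * cx z k)" for j k
  proof (rule bounded_integrable[OF M, where B=1])
    fix z assume z: "z \<in> space M"
    show "\<bar>cx z j * cx z k\<bar> \<le> 1" using cxB[OF z, of j] cxB[OF z, of k]
      by (simp add: abs_mult mult_le_one)
  qed measurable
  have i2: "integrable M (\<lambda>z. cx z j * cy z)" for j
  proof (rule bounded_integrable[OF M, where B=1])
    fix z assume z: "z \<in> space M"
    show "\<bar>cx z j * cy z\<bar> \<le> 1" using cxB[OF z, of j] cyB[OF z]
      by (simp add: abs_mult mult_le_one)
  qed measurable
  have i3: "integrable M (\<lambda>z. (cy z)\<^sup>2)"
  proof (rule bounded_integrable[OF M, where B=1])
    fix z assume z: "z \<in> space M"
    show "\<bar>(cy z)\<^sup>2\<bar> \<le> 1" using cyB[OF z] sq_le_of_abs_le[of "cy z" 1] by simp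
  qed measurable
  define F1 where "F1 z = (\<Sum>j\<in>UNIV. \<Sum>k\<in>UNIV. w$j * w$k * (cx z j * cx z k))" for z
  define F2 where "F2 z = (\<Sum>j\<in>UNIV. w$j * (cx z j * cy z))" for z
  have pw: "((\<Sum>j\<in>UNIV. w$j * cx z j) - cy z)\<^sup>2 = F1 z - 2 * F2 z + (cy z)\<^sup>2" for z
  proof -
    define A where "A = (\<Sum>j\<in>UNIV. w$j * cx z j)"
    have "(A - cy z)\<^sup>2 = A * A - 2 * (A * cy z) + (cy z)\<^sup>2" by (simp add: power2_eq_square algebra_simps)
    also have "A * A = F1 z" unfolding A_def F1_def sum_product by (simp add: mult_ac)
    also have "A * cy z = F2 z" unfolding A_def F2_def sum_distrib_right by (simp add: mult_ac)
    finally show ?thesis unfolding A_def .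
  qed
  have iF1: "integrable M F1" unfolding F1_def using i1 by (intro Bochner_Integration.integrable_sum integrable_mult_right) auto
  have iF2: "integrable M F2" unfolding F2_def using i2 by (intro Bochner_Integration.integrable_sum integrable_mult_right) auto
  have "dev M m (\<lambda>z. ((\<Sum>j\<in>UNIV. w$j * cx z j) - cy z)\<^sup>2) S = dev M m (\<lambda>z. (F1 z - 2 * F2 z) + (cy z)\<^sup>2) S"
    unfolding pw by simp
  also have "\<dots> = dev M m (\<lambda>z. F1 z - 2 * F2 z) S + dev M m (\<lambda>z. (cy z)\<^sup>2) S"
    using iF1 iF2 i3 by (intro dev_add) auto
  also have "dev M m (\<lambda>z. F1 z - 2 * F2 z) S = dev M m F1 S - dev M m (\<lambda>z. 2 * F2 z) S"
    using iF1 iF2 by (intro dev_diff) auto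
  also have "dev M m (\<lambda>z. 2 * F2 z) S = 2 * dev M m F2 S" by (rule dev_cmult)
  also have "dev M m F1 S = (\<Sum>j\<in>UNIV. \<Sum>k\<in>UNIV. w$j * w$k * dev M m (\<lambda>z. cx z j * cx z k) S)"
  proof -
    have "dev M m F1 S = (\<Sum>j\<in>UNIV. dev M m (\<lambda>z. \<Sum>k\<in>UNIV. w$j * w$k * (cx z j * cx z k)) S)"
      unfolding F1_def using i1 by (intro dev_sum Bochner_Integration.integrable_sum integrable_mult_right) auto
    also have "\<dots> = (\<Sum>j\<in>UNIV. \<Sum>k\<in>UNIV. dev M m (\<lambda>z. w$j * w$k * (cx z j * cx z k)) S)"
      using i1 by (intro sum.cong refl dev_sum integrable_mult_right) auto
    also have "\<dots> = (\<Sum>j\<in>UNIV. \<Sum>k\<in>UNIV. w$j * w$k * dev M m (\<lambda>z. cx z j * cx z k) S)"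
      by (simp add: dev_cmult)
    finally show ?thesis .
  qed
  also have "dev M m F2 S = (\<Sum>j\<in>UNIV. w$j * dev M m (\<lambda>z. cx z j * cy z) S)"
  proof -
    have "dev M m F2 S = (\<Sum>j\<in>UNIV. dev M m (\<lambda>z. w$j * (cx z j * cy z)) S)"
      unfolding F2_def using i2 by (intro dev_sum integrable_mult_right) auto
    also have "\<dots> = (\<Sum>j\<in>UNIV. w$j * dev M m (\<lambda>z. cx z j * cy z) S)"
      by (simp add: dev_cmult)
    finally show ?thesis .
  qed
  finally show ?thesis .
qed

lemma emp_risk_dev:
  fixes D :: "((real^'d) \<times> real) measure" and cx :: "(real^'d) \<times> real \<Rightarrow> 'd \<Rightarrow> real"
  assumes D: "prob_space D" and Good: "AE z in D. z \<in> G" and sets_D[measurable_cong]: "sets D = sets borel"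
    and cxm[measurable]: "\<And>j. (\<lambda>z. cx z j) \<in> borel_measurable D" and cym[measurable]: "cy \<in> borel_measurable D"
    and agree: "\<And>z. z \<in> G \<Longrightarrow> (\<forall>j. cx z j = fst z $ j) \<and> cy z = snd z"
    and SG: "\<And>i. i < m \<Longrightarrow> S i \<in> G"
  shows "emp_risk m S w - (\<integral>z. (w \<bullet> fst z - snd z)\<^sup>2 \<partial>D) = dev D m (\<lambda>z. ((\<Sum>j\<in>UNIV. w$j * cx z j) - cy z)\<^sup>2) S"
proof -
  have 1: "(\<integral>z. (w \<bullet> fst z - snd z)\<^sup>2 \<partial>D) = (\<integral>z. ((\<Sum>j\<in>UNIV. w$j * cx z j) - cy z)\<^sup>2 \<partial>D)"
  proof (rule integral_cong_AE)
    show "AE z in D. (w \<bullet> fst z - snd z)\<^sup>2 = ((\<Sum>j\<in>UNIV. w$j * cx z j) - cy z)\<^sup>2"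
      using Good by eventually_elim (use agree in \<open>auto simp: inner_vec_def\<close>)
  qed measurable
  have 2: "emp_risk m S w = (\<Sum>i<m. ((\<Sum>j\<in>UNIV. w$j * cx (S i) j) - cy (S i))\<^sup>2) / real m"
    unfolding emp_risk_def using SG agree by (auto simp: inner_vec_def intro!: sum.cong)
  show ?thesis unfolding dev_def 1 2 ..
qed

lemma final_combine:
  fixes D :: "((real^'d) \<times> real) measure" and \<sigma> \<delta> R :: real and wstar :: "real^'d"
  assumes prob: "prob_space D"
    and sets_D: "sets D = sets borel"
    and bdd: "AE z in D. (\<forall>i. \<bar>fst z $ i\<bar> \<le> 1) \<and> \<bar>snd z\<bar> \<le> 1"
    and wstar: "pnorm p wstar \<le> 1"
    and noise_mean: "AE z in D. real_cond_exp D (vimage_algebra (space D) fst borel)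
                        (\<lambda>z. snd z - wstar \<bullet> fst z) z = 0"
    and noise_var: "AE z in D. real_cond_exp D (vimage_algebra (space D) fst borel)
                        (\<lambda>z. (snd z - wstar \<bullet> fst z)^2) z = \<sigma>^2"
    and A: "A \<in> sets (PiM {..<m} (\<lambda>_. D))" "measure (PiM {..<m} (\<lambda>_. D)) A \<ge> 1 - \<delta>"
    and hA: "\<And>S w. S \<in> A \<Longrightarrow> pnorm p w \<le> 1 \<Longrightarrow> \<bar>emp_risk m S w - (\<integral>z. (w \<bullet> fst z - snd z)\<^sup>2 \<partial>D)\<bar> \<le> R"
  shows "\<exists>A \<in> sets (PiM {..<m} (\<lambda>_. D)).
           measure (PiM {..<m} (\<lambda>_. D)) A \<ge> 1 - \<delta> \<and>
           (\<forall>S\<in>A. \<forall>w. is_erm p m S w \<longrightarrow> \<bar>\<sigma>^2 - emp_risk m S w\<bar> \<le> R)"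
proof (intro bexI[OF _ A(1)] conjI A(2) ballI allI impI)
  fix S w assume S: "S \<in> A" and erm: "is_erm p m S w"
  have pw: "pnorm p w \<le> 1" and le: "emp_risk m S w \<le> emp_risk m S wstar"
    using erm wstar unfolding is_erm_def by auto
  have p1: "(\<integral>z. (wstar \<bullet> fst z - snd z)\<^sup>2 \<partial>D) = \<sigma>\<^sup>2"
    by (rule population(1)[OF prob sets_D bdd noise_mean noise_var])
  have p2: "\<sigma>\<^sup>2 \<le> (\<integral>z. (w \<bullet> fst z - snd z)\<^sup>2 \<partial>D)"
    by (rule population(2)[OF prob sets_D bdd noise_mean noise_var])
  have h1: "\<bar>emp_risk m S w - (\<integral>z. (w \<bullet> fst z - snd z)\<^sup>2 \<partial>D)\<bar> \<le> R" by (rule hA[OF S pw])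
  have h2: "\<bar>emp_risk m S wstar - (\<integral>z. (wstar \<bullet> fst z - snd z)\<^sup>2 \<partial>D)\<bar> \<le> R" by (rule hA[OF S wstar])
  show "\<bar>\<sigma>^2 - emp_risk m S w\<bar> \<le> R" using p1 p2 h1 h2 le unfolding abs_le_iff by linarith
qed



definition clip :: "real \<Rightarrow> real" where "clip t = max (-1) (min 1 t)"

lemma clip_bound: "\<bar>clip t\<bar> \<le> 1" unfolding clip_def by auto
lemma clip_id: "\<bar>t\<bar> \<le> 1 \<Longrightarrow> clip t = t" unfolding clip_def by auto
lemma clip_bm[measurable]: "clip \<in> borel_measurable borel" unfolding clip_def[abs_def] by measurable

definition feat :: "('b \<Rightarrow> 'd \<Rightarrow> real) \<Rightarrow> ('b \<Rightarrow> real) \<Rightarrow> ('d \<times> 'd) + 'd option \<Rightarrow> 'b \<Rightarrow> real" where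
  "feat cx cy a z = (case a of Inl jk \<Rightarrow> cx z (fst jk) * cx z (snd jk) | Inr None \<Rightarrow> (cy z)\<^sup>2 | Inr (Some j) \<Rightarrow> cx z j * cy z)"

lemma feat_measurable:
  assumes [measurable]: "\<And>j. (\<lambda>z. cx z j) \<in> borel_measurable M" "cy \<in> borel_measurable M"
  shows "feat cx cy a \<in> borel_measurable M"
proof (cases a)
  case (Inl jk) then show ?thesis unfolding feat_def[abs_def] by simp
next
  case (Inr b) then show ?thesis by (cases b) (simp_all add: feat_def[abs_def])
qed

lemma feat_bound:
  assumes "\<And>j. \<bar>cx z j\<bar> \<le> 1" "\<bar>cy z\<bar> \<le> 1"
  shows "\<bar>feat cx cy a z\<bar> \<le> 1"
proof (cases a)
  case (Inl jk) then show ?thesis using assms by (simp add: feat_def abs_mult mult_le_one)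
next
  case (Inr b) then show ?thesis using assms sq_le_of_abs_le[of "cy z" 1]
    by (cases b) (simp_all add: feat_def abs_mult mult_le_one)
qed

lemma gap_bound1:
  fixes w :: "real^'d"
  assumes w: "norm1 w \<le> 1" and D2: "\<And>j k. \<bar>D2 j k\<bar> \<le> t" and D1: "\<And>j. \<bar>D1 j\<bar> \<le> t" and D0: "\<bar>D0\<bar> \<le> t"
  shows "\<bar>(\<Sum>j\<in>UNIV. \<Sum>k\<in>UNIV. w$j * w$k * D2 j k) - 2 * (\<Sum>j\<in>UNIV. w$j * D1 j) + D0\<bar> \<le> 4 * t"
proof -
  have t: "t \<ge> 0" using D0 by linarith
  have n0: "norm1 w \<ge> 0" unfolding norm1_def by (simp add: sum_nonneg)
  have "\<bar>\<Sum>j\<in>UNIV. \<Sum>k\<in>UNIV. w$j * w$k * D2 j k\<bar> \<le> (\<Sum>j\<in>UNIV. \<Sum>k\<in>UNIV. \<bar>w$j\<bar> * \<bar>w$k\<bar> * t)"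
  proof (rule order_trans[OF sum_abs], rule sum_mono, rule order_trans[OF sum_abs], rule sum_mono)
    fix j k
    show "\<bar>w$j * w$k * D2 j k\<bar> \<le> \<bar>w$j\<bar> * \<bar>w$k\<bar> * t"
      by (simp add: abs_mult mult_left_mono D2)
  qed
  also have "\<dots> = t * (norm1 w * norm1 w)"
    unfolding norm1_def sum_product by (simp add: sum_distrib_left mult_ac)
  also have "\<dots> \<le> t * 1" using w n0 t by (intro mult_left_mono mult_le_one) auto
  finally have 2: "\<bar>\<Sum>j\<in>UNIV. \<Sum>k\<in>UNIV. w$j * w$k * D2 j k\<bar> \<le> t" by simp
  have "\<bar>\<Sum>j\<in>UNIV. w$j * D1 j\<bar> \<le> (\<Sum>j\<in>UNIV. \<bar>w$j\<bar> * t)"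
    by (rule order_trans[OF sum_abs], rule sum_mono) (simp add: abs_mult mult_left_mono D1)
  also have "\<dots> = t * norm1 w" unfolding norm1_def by (simp add: sum_distrib_left mult_ac)
  also have "\<dots> \<le> t * 1" using w t by (intro mult_left_mono) auto
  finally have 1: "\<bar>\<Sum>j\<in>UNIV. w$j * D1 j\<bar> \<le> t" by simp
  show ?thesis using 1 2 D0 unfolding abs_le_iff by linarith
qed


lemma feat_Inl: "feat cx cy (Inl (j, k)) = (\<lambda>z. cx z j * cx z k)" by (simp add: feat_def fun_eq_iff)
lemma feat_Some: "feat cx cy (Inr (Some j)) = (\<lambda>z. cx z j * cy z)" by (simp add: feat_def fun_eq_iff)
lemma feat_None: "feat cx cy (Inr None) = (\<lambda>z. (cy z)\<^sup>2)" by (simp add: feat_def fun_eq_iff)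

lemma AE_good_PiM:
  fixes m :: nat
  assumes D: "prob_space D" and G: "AE z in D. z \<in> G"
  shows "AE S in PiM {..<m} (\<lambda>_. D). \<forall>i\<in>{..<m}. S i \<in> G"
proof (rule eventually_ball_finite)
  show "\<forall>i\<in>{..<m}. AE S in PiM {..<m} (\<lambda>_. D). S i \<in> G"
  proof
    fix i assume i: "i \<in> {..<m}"
    show "AE S in PiM {..<m} (\<lambda>_. D). S i \<in> G"
      by (rule AE_PiM_component[where P="\<lambda>z. z \<in> G"]) (use D i G in auto)
  qed
qed (rule finite_lessThan)

lemma case1_main:
  fixes D :: "((real^'d) \<times> real) measure" and m :: nat and \<delta> :: real
  assumes prob: "prob_space D"
    and sets_D[measurable_cong]: "sets D = sets borel"
    and bdd: "AE z in D. (\<forall>i. \<bar>fst z $ i\<bar> \<le> 1) \<and> \<bar>snd z\<bar> \<le> 1"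
    and m: "m > 0" and \<delta>: "0 < \<delta>" "\<delta> < 1"
  shows "\<exists>A \<in> sets (PiM {..<m} (\<lambda>_. D)). measure (PiM {..<m} (\<lambda>_. D)) A \<ge> 1 - \<delta> \<and>
    (\<forall>S\<in>A. \<forall>w. norm1 w \<le> 1 \<longrightarrow> \<bar>emp_risk m S w - (\<integral>z. (w \<bullet> fst z - snd z)\<^sup>2 \<partial>D)\<bar>
        \<le> 4 * sqrt (2 * ln (2 * real CARD(('d \<times> 'd) + 'd option) / \<delta>) / real m))"
proof -
  interpret D: prob_space D by (rule prob)
  define P where "P = PiM {..<m} (\<lambda>_. D)"
  interpret P: prob_space P unfolding P_def by (intro prob_space_PiM prob)
  define N where "N = real CARD(('d \<times> 'd) + 'd option)"
  have N1: "N \<ge> 1" unfolding N_def by (simp add: Suc_le_eq)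
  define t where "t = sqrt (2 * ln (2 * N / \<delta>) / real m)"
  have pos: "2 * N / \<delta> \<ge> 1" using N1 \<delta> by (simp add: field_simps)
  then have lnpos: "ln (2 * N / \<delta>) \<ge> 0" by simp
  have t0: "t \<ge> 0" unfolding t_def using lnpos m by simp
  define cx where "cx z j = clip (fst z $ j)" for z :: "(real^'d) \<times> real" and j
  define cy where "cy z = clip (snd z)" for z :: "(real^'d) \<times> real"
  have cxm[measurable]: "(\<lambda>z. cx z j) \<in> borel_measurable D" for j unfolding cx_def by measurable
  have cym[measurable]: "cy \<in> borel_measurable D" unfolding cy_def[abs_def] by measurable
  have cxB: "\<bar>cx z j\<bar> \<le> 1" for z j unfolding cx_def by (rule clip_bound)
  have cyB: "\<bar>cy z\<bar> \<le> 1" for z unfolding cy_def by (rule clip_bound)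
  define G where "G = {z \<in> space D. (\<forall>i. \<bar>fst z $ i\<bar> \<le> 1) \<and> \<bar>snd z\<bar> \<le> 1}"
  have Gs[measurable]: "G \<in> sets D" unfolding G_def by measurable
  have GAE: "AE z in D. z \<in> G" using bdd AE_space[of D] by eventually_elim (auto simp: G_def)
  have agree: "(\<forall>j. cx z j = fst z $ j) \<and> cy z = snd z" if "z \<in> G" for z
    using that by (auto simp: G_def cx_def cy_def clip_id)
  have fm[measurable]: "feat cx cy a \<in> borel_measurable D" for a by (rule feat_measurable) measurable
  have fB: "\<bar>feat cx cy a z\<bar> \<le> 1" for a z by (rule feat_bound) (rule cxB, rule cyB)
  define A where "A = {S \<in> space P. (\<forall>i\<in>{..<m}. S i \<in> G) \<and> (\<forall>a\<in>UNIV. \<bar>dev D m (feat cx cy a) S\<bar> < t)}"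
  define B where "B = {S \<in> space P. (\<forall>a\<in>UNIV. \<bar>dev D m (feat cx cy a) S\<bar> < t)}"
  define Bad where "Bad a = {S \<in> space P. t \<le> \<bar>dev D m (feat cx cy a) S\<bar>}" for a
  have Bads[measurable]: "Bad a \<in> sets P" for a unfolding Bad_def P_def by measurable
  have Bs[measurable]: "B \<in> sets P" unfolding B_def P_def by measurable
  have As[measurable]: "A \<in> sets P"
  proof -
    have "A = B \<inter> (\<Inter>i\<in>{..<m}. {S \<in> space P. S i \<in> G})"
      unfolding A_def B_def using m by auto
    moreover have GS: "{S \<in> space P. S i \<in> G} \<in> sets P" if "i \<in> {..<m}" for i
    proof -
      have "(\<lambda>S. S i) \<in> measurable P D" unfolding P_def using that by (intro measurable_component_singleton) auto
      then have "(\<lambda>S. S i) -` G \<inter> space P \<in> sets P" using Gs by (rule measurable_sets)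
      moreover have "(\<lambda>S. S i) -` G \<inter> space P = {S \<in> space P. S i \<in> G}" by auto
      ultimately show ?thesis by simp
    qed
    then have "(\<Inter>i\<in>{..<m}. {S \<in> space P. S i \<in> G}) \<in> sets P"
      using m by (intro sets.finite_INT) auto
    ultimately show ?thesis using Bs by simp
  qed
  have pAB: "P.prob A = P.prob B"
  proof (rule measure_eq_AE)
    show "AE S in P. (S \<in> A) = (S \<in> B)"
      using AE_good_PiM[OF prob GAE, of m] unfolding P_def[symmetric]
      by eventually_elim (auto simp: A_def B_def)
  qed (use As Bs in auto)
  have pB: "P.prob B = 1 - P.prob (space P - B)" using P.prob_compl[OF Bs] by simp
  have cB: "space P - B = (\<Union>a\<in>UNIV. Bad a)" unfolding B_def Bad_def by (auto simp: not_less) (meson not_less)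
  have "P.prob (\<Union>a\<in>UNIV. Bad a) \<le> (\<Sum>a\<in>UNIV. P.prob (Bad a))"
    by (rule measure_UNION_le) auto
  also have "\<dots> \<le> (\<Sum>a\<in>(UNIV :: (('d \<times> 'd) + 'd option) set). 2 * exp (- real m * t\<^sup>2 / 2))"
  proof (rule sum_mono)
    fix a :: "('d \<times> 'd) + 'd option"
    show "P.prob (Bad a) \<le> 2 * exp (- real m * t\<^sup>2 / 2)"
      unfolding Bad_def P_def by (rule dev_tail[OF prob m t0 fm]) (use fB in auto)
  qed
  also have "\<dots> = \<delta>"
  proof -
    from lnpos have "real m * t\<^sup>2 / 2 = ln (2 * N / \<delta>)" unfolding t_def using m by simp
    then have "exp (- real m * t\<^sup>2 / 2) = \<delta> / (2 * N)"
      using pos N1 \<delta> by (simp add: exp_minus exp_ln)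
    moreover have "(\<Sum>a\<in>(UNIV :: (('d \<times> 'd) + 'd option) set). 2 * exp (- real m * t\<^sup>2 / 2)) = N * (2 * exp (- real m * t\<^sup>2 / 2))"
      by (simp only: sum_constant N_def)
    ultimately show ?thesis using N1 by simp
  qed
  finally have probA: "P.prob A \<ge> 1 - \<delta>" using pAB pB cB by simp
  show ?thesis
  proof (intro bexI[of _ A] conjI ballI allI impI)
    show "A \<in> sets (PiM {..<m} (\<lambda>_. D))" using As unfolding P_def .
    show "1 - \<delta> \<le> measure (PiM {..<m} (\<lambda>_. D)) A" using probA unfolding P_def .
    fix S and w :: "real^'d" assume S: "S \<in> A" and w: "norm1 w \<le> 1"
    have SG: "S i \<in> G" if "i < m" for i using S that unfolding A_def by auto
    have St: "\<bar>dev D m (feat cx cy a) S\<bar> \<le> t" for a using S unfolding A_def by (auto intro: less_imp_le)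
    have "emp_risk m S w - (\<integral>z. (w \<bullet> fst z - snd z)\<^sup>2 \<partial>D) = dev D m (\<lambda>z. ((\<Sum>j\<in>UNIV. w$j * cx z j) - cy z)\<^sup>2) S"
      by (rule emp_risk_dev[OF prob GAE sets_D cxm cym agree SG])
    also have "\<dots> = (\<Sum>j\<in>UNIV. \<Sum>k\<in>UNIV. w$j * w$k * dev D m (\<lambda>z. cx z j * cx z k) S)
     - 2 * (\<Sum>j\<in>UNIV. w$j * dev D m (\<lambda>z. cx z j * cy z) S) + dev D m (\<lambda>z. (cy z)\<^sup>2) S"
      by (rule gap_identity[OF prob cxm cym cxB cyB])
    finally have eq: "emp_risk m S w - (\<integral>z. (w \<bullet> fst z - snd z)\<^sup>2 \<partial>D) = \<dots>" .
    show "\<bar>emp_risk m S w - (\<integral>z. (w \<bullet> fst z - snd z)\<^sup>2 \<partial>D)\<bar>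
        \<le> 4 * sqrt (2 * ln (2 * real CARD(('d \<times> 'd) + 'd option) / \<delta>) / real m)"
      unfolding eq t_def[unfolded N_def, symmetric]
    proof (rule gap_bound1[OF w])
      show "\<bar>dev D m (\<lambda>z. cx z j * cx z k) S\<bar> \<le> t" for j k using St[of "Inl (j,k)"] by (simp add: feat_Inl)
      show "\<bar>dev D m (\<lambda>z. cx z j * cy z) S\<bar> \<le> t" for j using St[of "Inr (Some j)"] by (simp add: feat_Some)
      show "\<bar>dev D m (\<lambda>z. (cy z)\<^sup>2) S\<bar> \<le> t" using St[of "Inr None"] by (simp add: feat_None)
    qed
  qed
qed



lemma c_sqrt: "c \<ge> 0 \<Longrightarrow> c * sqrt x = sqrt (c\<^sup>2 * x)"
  by (simp add: real_sqrt_mult)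

lemma arith1:
  fixes d N m \<delta> :: real
  assumes d: "d \<ge> 1" and N: "N = d * d + (d + 1)" and m: "m > 0" and \<delta>: "0 < \<delta>" "\<delta> < 1"
  shows "4 * sqrt (2 * ln (2 * N / \<delta>) / m) \<le> 8 * sqrt (2 * ln (2 * d) / m) + 12 * sqrt (ln (4 / \<delta>) / (2 * m))"
proof -
  have dd: "d * d \<ge> 1"
  proof -
    have "1 * 1 \<le> d * d" by (rule mult_mono) (use d in auto)
    then show ?thesis by simp
  qed
  have Npos: "N > 0" using N d dd by simp
  define a where "a = 2 * ln (2 * N) / m"
  define b where "b = 2 * ln (1 / \<delta>) / m"
  have "ln (2 * N / \<delta>) = ln (2 * N) + ln (1 / \<delta>)"
    using Npos \<delta> by (simp add: ln_div ln_mult)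
  then have ab: "2 * ln (2 * N / \<delta>) / m = a + b" unfolding a_def b_def by (simp add: add_divide_distrib distrib_left)
  have l2N: "ln (2 * N) \<ge> 0" using Npos N d dd by simp
  have l1d: "ln (1 / \<delta>) \<ge> 0" using \<delta> by simp
  have a0: "a \<ge> 0" unfolding a_def using l2N m by simp
  have b0: "b \<ge> 0" unfolding b_def using l1d m by simp
  have s1: "4 * sqrt (a + b) \<le> 4 * (sqrt a + sqrt b)"
    using a0 b0 by (intro mult_left_mono sqrt_add_le_add_sqrt) auto
  have s2: "4 * sqrt a \<le> 8 * sqrt (2 * ln (2 * d) / m)"
  proof -
    have "2 * N \<le> (2 * d) ^ 4"
    proof -
      have e1: "d * d \<le> d * d * (d * d)" using dd by (simp add: mult_le_cancel_left1)
      have e2: "d \<le> d * d" using d by (simp add: mult_le_cancel_left1)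
      note e1 e2 dd
      then show ?thesis unfolding N by (simp add: power4_eq_xxxx algebra_simps)
    qed
    then have "ln (2 * N) \<le> ln ((2 * d) ^ 4)" using Npos by (intro ln_mono) auto
    also have "\<dots> = 4 * ln (2 * d)" using d by (subst ln_realpow) auto
    finally have "16 * a \<le> 64 * (2 * ln (2 * d) / m)" unfolding a_def using m by (simp add: divide_right_mono)
    then have "sqrt (4\<^sup>2 * a) \<le> sqrt (8\<^sup>2 * (2 * ln (2 * d) / m))" by simp
    then show ?thesis by (simp add: c_sqrt)
  qed
  have s3: "4 * sqrt b \<le> 12 * sqrt (ln (4 / \<delta>) / (2 * m))"
  proof -
    have "ln (1 / \<delta>) \<le> ln (4 / \<delta>)" using \<delta> by (simp add: divide_right_mono)
    then have "16 * b \<le> 144 * (ln (4 / \<delta>) / (2 * m))" unfolding b_def using m l1d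
      by (simp add: field_simps)
    then have "sqrt (4\<^sup>2 * b) \<le> sqrt (12\<^sup>2 * (ln (4 / \<delta>) / (2 * m)))" by simp
    then show ?thesis by (simp add: c_sqrt)
  qed
  show ?thesis unfolding ab using s1[unfolded distrib_left] s2 s3 by linarith
qed



lemma L2_set_sq: "finite A \<Longrightarrow> (L2_set f A)\<^sup>2 = (\<Sum>a\<in>A. (f a)\<^sup>2)"
  unfolding L2_set_def by (simp add: sum_nonneg)

lemma L2_set_diff_le: "\<bar>L2_set f A - L2_set g A\<bar> \<le> L2_set (\<lambda>a. f a - g a) A"
proof -
  have 1: "L2_set f A \<le> L2_set g A + L2_set (\<lambda>a. f a - g a) A"
    using L2_set_triangle_ineq[of g "\<lambda>a. f a - g a" A] by simp
  have 2: "L2_set g A \<le> L2_set f A + L2_set (\<lambda>a. g a - f a) A"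
    using L2_set_triangle_ineq[of f "\<lambda>a. g a - f a" A] by simp
  have "L2_set (\<lambda>a. g a - f a) A = L2_set (\<lambda>a. f a - g a) A"
    unfolding L2_set_def by (simp add: power2_commute)
  then show ?thesis using 1 2 unfolding abs_le_iff by linarith
qed

lemma L2dev:
  fixes M :: "'b measure" and \<phi> :: "'i::finite \<Rightarrow> 'b \<Rightarrow> real" and m :: nat
  assumes M: "prob_space M" and m: "m > 0"
    and \<phi>m[measurable]: "\<And>a. \<phi> a \<in> borel_measurable M"
    and \<phi>B: "\<And>a z. z \<in> space M \<Longrightarrow> \<bar>\<phi> a z\<bar> \<le> 1"
    and \<phi>S: "\<And>z. z \<in> space M \<Longrightarrow> (\<Sum>a\<in>UNIV. (\<phi> a z)\<^sup>2) \<le> 1"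
  defines "H \<equiv> (\<lambda>S. L2_set (\<lambda>a. dev M m (\<phi> a) S) UNIV)"
  shows "H \<in> borel_measurable (PiM {..<m} (\<lambda>_. M))"
    and "\<And>S. S \<in> space (PiM {..<m} (\<lambda>_. M)) \<Longrightarrow> \<bar>H S\<bar> \<le> 2 * real CARD('i)"
    and "\<And>S i y. S \<in> space (PiM {..<m} (\<lambda>_. M)) \<Longrightarrow> i < m \<Longrightarrow> y \<in> space M \<Longrightarrow> \<bar>H S - H (S(i:=y))\<bar> \<le> 2 / real m"
    and "integrable (PiM {..<m} (\<lambda>_. M)) H"
    and "(\<integral>S. H S \<partial>PiM {..<m} (\<lambda>_. M)) \<le> sqrt (1 / real m)"
proof -
  define P where "P = PiM {..<m} (\<lambda>_. M)"
  interpret M: prob_space M by (rule M)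
  interpret P: prob_space P unfolding P_def by (intro prob_space_PiM M)
  show Hm: "H \<in> borel_measurable (PiM {..<m} (\<lambda>_. M))" unfolding H_def L2_set_def by measurable
  have devB: "\<bar>dev M m (\<phi> a) S\<bar> \<le> 2" if "S \<in> space P" for a S
    by (rule dev_bound[OF m M \<phi>m \<phi>B that[unfolded P_def]])
  show HB: "\<bar>H S\<bar> \<le> 2 * real CARD('i)" if S: "S \<in> space (PiM {..<m} (\<lambda>_. M))" for S
  proof -
    have "\<bar>H S\<bar> = H S" unfolding H_def by simp
    also have "\<dots> \<le> (\<Sum>a\<in>UNIV. \<bar>dev M m (\<phi> a) S\<bar>)" unfolding H_def by (rule L2_set_le_sum_abs)
    also have "\<dots> \<le> (\<Sum>a\<in>(UNIV::'i set). 2)" using S by (intro sum_mono devB) (simp add: P_def)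
    finally show ?thesis by simp
  qed
  have L2\<phi>: "L2_set (\<lambda>a. \<phi> a z) UNIV \<le> 1" if "z \<in> space M" for z
    unfolding L2_set_def using \<phi>S[OF that] by simp
  show "\<bar>H S - H (S(i:=y))\<bar> \<le> 2 / real m"
    if S: "S \<in> space (PiM {..<m} (\<lambda>_. M))" and i: "i < m" and y: "y \<in> space M" for S i y
  proof -
    have Si: "S i \<in> space M" using S i by (auto simp: space_PiM PiE_iff)
    have "\<bar>H S - H (S(i:=y))\<bar> \<le> L2_set (\<lambda>a. dev M m (\<phi> a) S - dev M m (\<phi> a) (S(i:=y))) UNIV"
      unfolding H_def by (rule L2_set_diff_le)
    also have "(\<lambda>a. dev M m (\<phi> a) S - dev M m (\<phi> a) (S(i:=y))) = (\<lambda>a. (1 / real m) * (\<phi> a (S i) + (- \<phi> a y)))"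
      by (simp add: dev_upd[OF i] fun_eq_iff diff_divide_distrib)
    also have "L2_set \<dots> UNIV = (1 / real m) * L2_set (\<lambda>a. \<phi> a (S i) + (- \<phi> a y)) UNIV"
      by (rule L2_set_right_distrib[symmetric]) simp
    also have "\<dots> \<le> (1 / real m) * (L2_set (\<lambda>a. \<phi> a (S i)) UNIV + L2_set (\<lambda>a. - \<phi> a y) UNIV)"
      by (intro mult_left_mono L2_set_triangle_ineq) simp
    also have "L2_set (\<lambda>a. - \<phi> a y) UNIV = L2_set (\<lambda>a. \<phi> a y) UNIV" unfolding L2_set_def by simp
    also have "(1 / real m) * (L2_set (\<lambda>a. \<phi> a (S i)) UNIV + L2_set (\<lambda>a. \<phi> a y) UNIV) \<le> (1 / real m) * (1 + 1)"
      by (intro mult_left_mono add_mono L2\<phi> Si y) simp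
    finally show ?thesis by (simp del: fun_upd_apply)
  qed
  show Hi: "integrable (PiM {..<m} (\<lambda>_. M)) H"
    by (rule bounded_integrable[OF prob_space_PiM[OF M] Hm HB]) simp
  have H2: "(H S)\<^sup>2 = (\<Sum>a\<in>UNIV. (dev M m (\<phi> a) S)\<^sup>2)" for S unfolding H_def by (rule L2_set_sq) simp
  have dev2i: "integrable P (\<lambda>S. (dev M m (\<phi> a) S)\<^sup>2)" for a
  proof (rule bounded_integrable[where B=4])
    show "prob_space P" by (rule P.prob_space_axioms)
    show "(\<lambda>S. (dev M m (\<phi> a) S)\<^sup>2) \<in> borel_measurable P" unfolding P_def by measurable
    fix S assume "S \<in> space P"
    then have "\<bar>dev M m (\<phi> a) S\<bar> \<le> 2" by (rule devB)
    then have "(dev M m (\<phi> a) S)\<^sup>2 \<le> 2\<^sup>2" by (rule sq_le_of_abs_le)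
    then show "\<bar>(dev M m (\<phi> a) S)\<^sup>2\<bar> \<le> 4" by simp
  qed
  have H2i: "integrable P (\<lambda>S. (H S)\<^sup>2)" unfolding H2 using dev2i by (intro Bochner_Integration.integrable_sum) auto
  have "(\<integral>S. H S \<partial>P) \<le> sqrt (\<integral>S. (H S)\<^sup>2 \<partial>P)"
    by (rule P.integral_le_sqrt_sq[OF Hi[folded P_def] H2i])
  also have "(\<integral>S. (H S)\<^sup>2 \<partial>P) = (\<Sum>a\<in>UNIV. (\<integral>S. (dev M m (\<phi> a) S)\<^sup>2 \<partial>P))"
    unfolding H2 by (rule Bochner_Integration.integral_sum) (rule dev2i)
  also have "\<dots> \<le> (\<Sum>a\<in>UNIV. (\<integral>z. (\<phi> a z)\<^sup>2 \<partial>M) / real m)"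
    by (intro sum_mono) (unfold P_def, rule dev_sq[OF M m \<phi>m \<phi>B])
  also have "\<dots> = (\<integral>z. (\<Sum>a\<in>UNIV. (\<phi> a z)\<^sup>2) \<partial>M) / real m"
  proof -
    have "integrable M (\<lambda>z. (\<phi> a z)\<^sup>2)" for a
    proof (rule bounded_integrable[OF M, where B=1])
      fix z assume "z \<in> space M"
      then have "(\<phi> a z)\<^sup>2 \<le> 1\<^sup>2" by (intro sq_le_of_abs_le \<phi>B)
      then show "\<bar>(\<phi> a z)\<^sup>2\<bar> \<le> 1" by simp
    qed measurable
    then show ?thesis by (simp add: sum_divide_distrib[symmetric] Bochner_Integration.integral_sum)
  qed
  also have "\<dots> \<le> 1 / real m"
  proof (intro divide_right_mono)
    show "(\<integral>z. (\<Sum>a\<in>UNIV. (\<phi> a z)\<^sup>2) \<partial>M) \<le> 1"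
    proof (rule M.integral_le_const)
      show "AE z in M. (\<Sum>a\<in>UNIV. (\<phi> a z)\<^sup>2) \<le> 1" using \<phi>S by (intro AE_I2) auto
      show "integrable M (\<lambda>z. \<Sum>a\<in>UNIV. (\<phi> a z)\<^sup>2)"
      proof (rule bounded_integrable[OF M, where B=1])
        fix z assume z: "z \<in> space M"
        have "0 \<le> (\<Sum>a\<in>UNIV. (\<phi> a z)\<^sup>2)" by (simp add: sum_nonneg)
        then show "\<bar>\<Sum>a\<in>UNIV. (\<phi> a z)\<^sup>2\<bar> \<le> 1" using \<phi>S[OF z] by simp
      qed measurable
    qed
  qed simp
  finally show "(\<integral>S. H S \<partial>PiM {..<m} (\<lambda>_. M)) \<le> sqrt (1 / real m)" unfolding P_def by simp
qed


lemma feat_Inl': "feat cx cy (Inl p) = (\<lambda>z. cx z (fst p) * cx z (snd p))" by (simp add: feat_def fun_eq_iff)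

lemma norm_le_of_inner:
  fixes x :: "real^'d"
  assumes "\<forall>w::real^'d. norm w \<le> 1 \<longrightarrow> \<bar>w \<bullet> x\<bar> \<le> 1"
  shows "norm x \<le> 1"
proof (cases "x = 0")
  case False
  define w where "w = x /\<^sub>R norm x"
  have "norm w \<le> 1" using False by (simp add: w_def)
  then have "\<bar>w \<bullet> x\<bar> \<le> 1" using assms by blast
  moreover have "w \<bullet> x = norm x" using False by (simp add: w_def dot_square_norm power2_eq_square)
  ultimately show ?thesis by simp
qed simp

lemma sum_sq_vec: "(\<Sum>j\<in>UNIV. (x $ j)\<^sup>2) = (norm (x::real^'d))\<^sup>2"
proof -
  have "(norm x)\<^sup>2 = x \<bullet> x" by (rule power2_norm_eq_inner)
  also have "\<dots> = (\<Sum>j\<in>UNIV. (x $ j)\<^sup>2)" unfolding inner_vec_def by (simp add: power2_eq_square)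
  finally show ?thesis by simp
qed

lemma gap_bound2:
  fixes w :: "real^'d" and D2 :: "'d \<times> 'd \<Rightarrow> real"
  assumes w: "norm w \<le> 1"
  shows "\<bar>(\<Sum>j\<in>UNIV. \<Sum>k\<in>UNIV. w$j * w$k * D2 (j, k)) - 2 * (\<Sum>j\<in>UNIV. w$j * D1 j) + D0\<bar>
    \<le> L2_set D2 UNIV + 2 * L2_set D1 UNIV + L2_set (\<lambda>_::unit. D0) UNIV"
proof -
  have n2: "(\<Sum>j\<in>UNIV. (w $ j)\<^sup>2) \<le> 1" unfolding sum_sq_vec using w by (simp add: power_le_one)
  have "(\<Sum>j\<in>UNIV. \<Sum>k\<in>UNIV. w$j * w$k * D2 (j, k)) = (\<Sum>p\<in>UNIV. (w $ fst p * w $ snd p) * D2 p)"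
    by (simp add: sum.cartesian_product UNIV_Times_UNIV[symmetric] split_beta del: UNIV_Times_UNIV)
  also have "\<bar>\<dots>\<bar> \<le> (\<Sum>p\<in>UNIV. \<bar>w $ fst p * w $ snd p\<bar> * \<bar>D2 p\<bar>)"
    by (rule order_trans[OF sum_abs]) (simp add: abs_mult)
  also have "\<dots> \<le> L2_set (\<lambda>p. w $ fst p * w $ snd p) UNIV * L2_set D2 UNIV" by (rule L2_set_mult_ineq)
  also have "L2_set (\<lambda>p. w $ fst p * w $ snd p) UNIV = (\<Sum>j\<in>UNIV. (w $ j)\<^sup>2)"
  proof -
    have "(\<Sum>p\<in>UNIV. (w $ fst p * w $ snd p)\<^sup>2) = (\<Sum>j\<in>UNIV. \<Sum>k\<in>UNIV. (w $ j)\<^sup>2 * (w $ k)\<^sup>2)"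
      by (simp add: sum.cartesian_product UNIV_Times_UNIV[symmetric] power_mult_distrib split_beta del: UNIV_Times_UNIV)
    also have "\<dots> = (\<Sum>j\<in>UNIV. (w $ j)\<^sup>2)\<^sup>2" by (simp add: power2_eq_square sum_product)
    finally show ?thesis unfolding L2_set_def by (simp add: sum_nonneg)
  qed
  also have "(\<Sum>j\<in>UNIV. (w $ j)\<^sup>2) * L2_set D2 UNIV \<le> 1 * L2_set D2 UNIV"
    using n2 by (intro mult_right_mono) auto
  finally have 2: "\<bar>\<Sum>j\<in>UNIV. \<Sum>k\<in>UNIV. w$j * w$k * D2 (j, k)\<bar> \<le> L2_set D2 UNIV" by simp
  have "\<bar>\<Sum>j\<in>UNIV. w$j * D1 j\<bar> \<le> (\<Sum>j\<in>UNIV. \<bar>w$j\<bar> * \<bar>D1 j\<bar>)"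
    by (rule order_trans[OF sum_abs]) (simp add: abs_mult)
  also have "\<dots> \<le> L2_set (\<lambda>j. w $ j) UNIV * L2_set D1 UNIV" by (rule L2_set_mult_ineq)
  also have "L2_set (\<lambda>j. w $ j) UNIV = norm w" by (simp add: norm_vec_def L2_set_def)
  also have "norm w * L2_set D1 UNIV \<le> 1 * L2_set D1 UNIV" using w by (intro mult_right_mono) auto
  finally have 1: "\<bar>\<Sum>j\<in>UNIV. w$j * D1 j\<bar> \<le> L2_set D1 UNIV" by simp
  have 0: "L2_set (\<lambda>_::unit. D0) UNIV = \<bar>D0\<bar>" by (simp add: L2_set_def UNIV_unit)
  show ?thesis using 0 1 2 unfolding abs_le_iff by linarith
qed


lemma case2_main:
  fixes D :: "((real^'d) \<times> real) measure" and m :: nat and \<delta> :: real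
  assumes prob: "prob_space D"
    and sets_D[measurable_cong]: "sets D = sets borel"
    and bdd: "AE z in D. (\<forall>i. \<bar>fst z $ i\<bar> \<le> 1) \<and> \<bar>snd z\<bar> \<le> 1"
    and bddF: "AE z in D. \<forall>w. pnorm 2 w \<le> 1 \<longrightarrow> \<bar>w \<bullet> fst z\<bar> \<le> 1"
    and m: "m > 0" and \<delta>: "0 < \<delta>" "\<delta> < 1"
  shows "\<exists>A \<in> sets (PiM {..<m} (\<lambda>_. D)). measure (PiM {..<m} (\<lambda>_. D)) A \<ge> 1 - \<delta> \<and>
    (\<forall>S\<in>A. \<forall>w. norm w \<le> 1 \<longrightarrow> \<bar>emp_risk m S w - (\<integral>z. (w \<bullet> fst z - snd z)\<^sup>2 \<partial>D)\<bar>
        \<le> 4 * sqrt (1 / real m) + sqrt (32 * ln (1 / \<delta>) / real m))"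
proof -
  interpret D: prob_space D by (rule prob)
  define P where "P = PiM {..<m} (\<lambda>_. D)"
  interpret P: prob_space P unfolding P_def by (intro prob_space_PiM prob)
  define cx where "cx z j = fst z $ j / max 1 (norm (fst z))" for z :: "(real^'d) \<times> real" and j
  define cy where "cy z = clip (snd z)" for z :: "(real^'d) \<times> real"
  have cxm[measurable]: "(\<lambda>z. cx z j) \<in> borel_measurable D" for j unfolding cx_def by measurable
  have cym[measurable]: "cy \<in> borel_measurable D" unfolding cy_def[abs_def] by measurable
  have cxS: "(\<Sum>j\<in>UNIV. (cx z j)\<^sup>2) \<le> 1" for z
  proof -
    define M where "M = max 1 (norm (fst z))"
    have M: "M > 0" "norm (fst z) \<le> M" unfolding M_def by auto
    have "(\<Sum>j\<in>UNIV. (cx z j)\<^sup>2) = (\<Sum>j\<in>UNIV. (fst z $ j)\<^sup>2) / M\<^sup>2"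
      unfolding cx_def M_def[symmetric] by (simp add: power_divide sum_divide_distrib)
    also have "\<dots> = (norm (fst z))\<^sup>2 / M\<^sup>2" by (simp add: sum_sq_vec)
    also have "\<dots> \<le> 1" using M by (simp add: power_mono)
    finally show ?thesis .
  qed
  have cxB: "\<bar>cx z j\<bar> \<le> 1" for z j
  proof -
    have "(cx z j)\<^sup>2 \<le> (\<Sum>j\<in>UNIV. (cx z j)\<^sup>2)" by (rule member_le_sum) auto
    then have "(cx z j)\<^sup>2 \<le> 1" using cxS[of z] by linarith
    then show ?thesis by (simp add: abs_square_le_1)
  qed
  have cyB: "\<bar>cy z\<bar> \<le> 1" for z unfolding cy_def by (rule clip_bound)
  have cy2: "(cy z)\<^sup>2 \<le> 1" for z using sq_le_of_abs_le[OF cyB[of z]] by simp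
  define G where "G = {z \<in> space D. norm (fst z) \<le> 1 \<and> \<bar>snd z\<bar> \<le> 1}"
  have Gs[measurable]: "G \<in> sets D" unfolding G_def by measurable
  have GAE: "AE z in D. z \<in> G" using bdd bddF AE_space[of D]
  proof eventually_elim
    case (elim z)
    have "\<forall>w::real^'d. norm w \<le> 1 \<longrightarrow> \<bar>w \<bullet> fst z\<bar> \<le> 1" using elim by (simp add: pnorm_def)
    then have "norm (fst z) \<le> 1" by (rule norm_le_of_inner)
    then show ?case using elim by (simp add: G_def)
  qed
  have agree: "(\<forall>j. cx z j = fst z $ j) \<and> cy z = snd z" if "z \<in> G" for z
    using that by (auto simp: G_def cx_def cy_def clip_id max_def)
  define \<phi>2 where "\<phi>2 p = feat cx cy (Inl p)" for p :: "'d \<times> 'd"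
  define \<phi>1 where "\<phi>1 j = feat cx cy (Inr (Some j))" for j :: 'd
  define \<phi>0 where "\<phi>0 (u::unit) = feat cx cy (Inr None)" for u
  have fm: "feat cx cy a \<in> borel_measurable D" for a by (rule feat_measurable) measurable
  have fB: "\<bar>feat cx cy a z\<bar> \<le> 1" for a z by (rule feat_bound) (rule cxB, rule cyB)
  have S2: "(\<Sum>p\<in>UNIV. (\<phi>2 p z)\<^sup>2) \<le> 1" for z
  proof -
    have "(\<Sum>p\<in>UNIV. (\<phi>2 p z)\<^sup>2) = (\<Sum>j\<in>UNIV. \<Sum>k\<in>UNIV. (cx z j)\<^sup>2 * (cx z k)\<^sup>2)"
      by (simp add: \<phi>2_def feat_Inl' sum.cartesian_product UNIV_Times_UNIV[symmetric] power_mult_distrib split_beta del: UNIV_Times_UNIV)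
    also have "\<dots> = (\<Sum>j\<in>UNIV. (cx z j)\<^sup>2)\<^sup>2" by (simp add: power2_eq_square sum_product)
    also have "\<dots> \<le> 1" using cxS[of z] by (simp add: power_le_one sum_nonneg)
    finally show ?thesis .
  qed
  have S1: "(\<Sum>j\<in>UNIV. (\<phi>1 j z)\<^sup>2) \<le> 1" for z
  proof -
    have "(\<Sum>j\<in>UNIV. (\<phi>1 j z)\<^sup>2) = (\<Sum>j\<in>UNIV. (cx z j)\<^sup>2) * (cy z)\<^sup>2"
      by (simp add: \<phi>1_def feat_Some power_mult_distrib sum_distrib_right)
    also have "\<dots> \<le> 1 * 1" using cxS[of z] cy2[of z] by (intro mult_mono) (auto simp: sum_nonneg)
    finally show ?thesis by simp
  qed
  have S0: "(\<Sum>u\<in>UNIV. (\<phi>0 u z)\<^sup>2) \<le> 1" for z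
  proof -
    have "(\<Sum>u\<in>UNIV. (\<phi>0 u z)\<^sup>2) = (cy z)\<^sup>2 * (cy z)\<^sup>2"
      by (simp add: \<phi>0_def feat_None UNIV_unit power2_eq_square)
    also have "\<dots> \<le> 1 * 1" using cy2[of z] by (intro mult_mono) auto
    finally show ?thesis by simp
  qed
  define H2 where "H2 = (\<lambda>S. L2_set (\<lambda>a. dev D m (\<phi>2 a) S) UNIV)"
  define H1 where "H1 = (\<lambda>S. L2_set (\<lambda>a. dev D m (\<phi>1 a) S) UNIV)"
  define H0 where "H0 = (\<lambda>S. L2_set (\<lambda>a. dev D m (\<phi>0 a) S) UNIV)"
  note L2 = L2dev[OF prob m]
  note h2 = L2[of \<phi>2, folded H2_def, OF _ _ S2, unfolded P_def[symmetric]]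
  note h1 = L2[of \<phi>1, folded H1_def, OF _ _ S1, unfolded P_def[symmetric]]
  note h0 = L2[of \<phi>0, folded H0_def, OF _ _ S0, unfolded P_def[symmetric]]
  have m2: "\<phi>2 a \<in> borel_measurable D" "\<phi>1 b \<in> borel_measurable D" "\<phi>0 u \<in> borel_measurable D" for a b u
    unfolding \<phi>2_def \<phi>1_def \<phi>0_def by (rule fm)+
  have b2: "\<bar>\<phi>2 a z\<bar> \<le> 1" "\<bar>\<phi>1 b z\<bar> \<le> 1" "\<bar>\<phi>0 u z\<bar> \<le> 1" for a b u z
    unfolding \<phi>2_def \<phi>1_def \<phi>0_def by (rule fB)+
  note h2 = h2[OF m2(1) b2(1)] and h1 = h1[OF m2(2) b2(2)] and h0 = h0[OF m2(3) b2(3)]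
  define Gf where "Gf S = H2 S + 2 * H1 S + H0 S" for S
  define E where "E = (\<integral>S. Gf S \<partial>P)"
  have Gfm[measurable]: "Gf \<in> borel_measurable P" unfolding Gf_def[abs_def] using h2(1) h1(1) h0(1) by measurable
  have E_le: "E \<le> 4 * sqrt (1 / real m)"
  proof -
    have "E = (\<integral>S. H2 S \<partial>P) + 2 * (\<integral>S. H1 S \<partial>P) + (\<integral>S. H0 S \<partial>P)"
      unfolding E_def Gf_def using h2(4) h1(4) h0(4) by simp
    then show ?thesis using h2(5) h1(5) h0(5) by linarith
  qed
  define t2 where "t2 = sqrt (32 * ln (1 / \<delta>) / real m)"
  have l1: "ln (1 / \<delta>) > 0" using \<delta> by simp
  have t2pos: "t2 \<ge> 0" unfolding t2_def using l1 m by simp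
  define A where "A = {S \<in> space P. (\<forall>i\<in>{..<m}. S i \<in> G) \<and> Gf S < E + t2}"
  define B where "B = {S \<in> space P. Gf S < E + t2}"
  have Bs[measurable]: "B \<in> sets P" unfolding B_def by measurable
  have As[measurable]: "A \<in> sets P"
  proof -
    have "A = B \<inter> (\<Inter>i\<in>{..<m}. {S \<in> space P. S i \<in> G})"
      unfolding A_def B_def using m by auto
    moreover have GS: "{S \<in> space P. S i \<in> G} \<in> sets P" if "i \<in> {..<m}" for i
    proof -
      have "(\<lambda>S. S i) \<in> measurable P D" unfolding P_def using that by (intro measurable_component_singleton) auto
      then have "(\<lambda>S. S i) -` G \<inter> space P \<in> sets P" using Gs by (rule measurable_sets)
      moreover have "(\<lambda>S. S i) -` G \<inter> space P = {S \<in> space P. S i \<in> G}" by auto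
      ultimately show ?thesis by simp
    qed
    then have "(\<Inter>i\<in>{..<m}. {S \<in> space P. S i \<in> G}) \<in> sets P"
      using m by (intro sets.finite_INT) auto
    ultimately show ?thesis using Bs by simp
  qed
  have pAB: "P.prob A = P.prob B"
  proof (rule measure_eq_AE)
    show "AE S in P. (S \<in> A) = (S \<in> B)"
      using AE_good_PiM[OF prob GAE, of m] unfolding P_def[symmetric]
      by eventually_elim (auto simp: A_def B_def)
  qed (use As Bs in auto)
  have pB: "P.prob B = 1 - P.prob (space P - B)" using P.prob_compl[OF Bs] by simp
  have cB: "space P - B = {S \<in> space P. Gf S \<ge> E + t2}" unfolding B_def by auto
  have "P.prob {S \<in> space P. Gf S \<ge> E + t2} \<le> exp (- 2 * t2\<^sup>2 / (real m * (8 / real m)\<^sup>2))"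
    unfolding E_def P_def
  proof (rule mcdiarmid[OF prob m _ t2pos])
    show "Gf \<in> borel_measurable (PiM {..<m} (\<lambda>_. D))" using Gfm unfolding P_def .
    show "\<bar>Gf S\<bar> \<le> 2 * real CARD('d \<times> 'd) + 2 * (2 * real CARD('d)) + 2 * real CARD(unit)"
      if "S \<in> space (PiM {..<m} (\<lambda>_. D))" for S
      using h2(2)[OF that[folded P_def]] h1(2)[OF that[folded P_def]] h0(2)[OF that[folded P_def]]
      unfolding Gf_def H2_def H1_def H0_def abs_le_iff by linarith
    show "\<bar>Gf S - Gf (S(i:=y))\<bar> \<le> 8 / real m"
      if "S \<in> space (PiM {..<m} (\<lambda>_. D))" "i < m" "y \<in> space D" for S i y
      using h2(3)[OF that[folded P_def]] h1(3)[OF that[folded P_def]] h0(3)[OF that[folded P_def]]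
      unfolding Gf_def H2_def H1_def H0_def abs_le_iff by (simp add: field_simps)
  qed (use m in auto)
  also have "- 2 * t2\<^sup>2 / (real m * (8 / real m)\<^sup>2) = - ln (1 / \<delta>)"
    unfolding t2_def using l1 m by (simp add: field_simps power2_eq_square)
  also have "exp (- ln (1 / \<delta>)) = \<delta>" using \<delta> by (simp add: exp_minus)
  finally have pbad: "P.prob {S \<in> space P. Gf S \<ge> E + t2} \<le> \<delta>" .
  have probA: "P.prob A \<ge> 1 - \<delta>" using pAB pB cB pbad by simp
  show ?thesis
  proof (intro bexI[of _ A] conjI ballI allI impI)
    show "A \<in> sets (PiM {..<m} (\<lambda>_. D))" using As unfolding P_def .
    show "1 - \<delta> \<le> measure (PiM {..<m} (\<lambda>_. D)) A" using probA unfolding P_def .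
    fix S and w :: "real^'d" assume S: "S \<in> A" and w: "norm w \<le> 1"
    have SG: "S i \<in> G" if "i < m" for i using S that unfolding A_def by auto
    have SE: "Gf S < E + t2" using S unfolding A_def by auto
    have "emp_risk m S w - (\<integral>z. (w \<bullet> fst z - snd z)\<^sup>2 \<partial>D) = dev D m (\<lambda>z. ((\<Sum>j\<in>UNIV. w$j * cx z j) - cy z)\<^sup>2) S"
      by (rule emp_risk_dev[OF prob GAE sets_D cxm cym agree SG])
    also have "\<dots> = (\<Sum>j\<in>UNIV. \<Sum>k\<in>UNIV. w$j * w$k * dev D m (\<lambda>z. cx z j * cx z k) S)
     - 2 * (\<Sum>j\<in>UNIV. w$j * dev D m (\<lambda>z. cx z j * cy z) S) + dev D m (\<lambda>z. (cy z)\<^sup>2) S"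
      by (rule gap_identity[OF prob cxm cym cxB cyB])
    also have "\<dots> = (\<Sum>j\<in>UNIV. \<Sum>k\<in>UNIV. w$j * w$k * dev D m (\<phi>2 (j, k)) S)
     - 2 * (\<Sum>j\<in>UNIV. w$j * dev D m (\<phi>1 j) S) + dev D m (\<phi>0 ()) S"
      by (simp add: \<phi>2_def \<phi>1_def \<phi>0_def feat_Inl feat_Some feat_None)
    finally have eq: "emp_risk m S w - (\<integral>z. (w \<bullet> fst z - snd z)\<^sup>2 \<partial>D) = \<dots>" .
    have "\<bar>emp_risk m S w - (\<integral>z. (w \<bullet> fst z - snd z)\<^sup>2 \<partial>D)\<bar> \<le> Gf S"
      unfolding eq Gf_def H2_def H1_def H0_def
      using gap_bound2[OF w, of "\<lambda>p. dev D m (\<phi>2 p) S" "\<lambda>j. dev D m (\<phi>1 j) S" "dev D m (\<phi>0 ()) S"]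
      by simp
    then show "\<bar>emp_risk m S w - (\<integral>z. (w \<bullet> fst z - snd z)\<^sup>2 \<partial>D)\<bar>
        \<le> 4 * sqrt (1 / real m) + sqrt (32 * ln (1 / \<delta>) / real m)"
      using SE E_le unfolding t2_def by linarith
  qed
qed



lemma arith2:
  fixes d m \<delta> :: real
  assumes d: "d \<ge> 1" and m: "m > 0" and \<delta>: "0 < \<delta>" "\<delta> < 1"
  shows "4 * sqrt (1 / m) + sqrt (32 * ln (1 / \<delta>) / m) \<le> 8 * sqrt (d / m) + 12 * sqrt (ln (4 / \<delta>) / (2 * m))"
proof -
  have "sqrt (1 / m) \<le> sqrt (d / m)" using d m by (simp add: divide_right_mono)
  moreover have "0 \<le> sqrt (d / m)" using d m by simp
  ultimately have 1: "4 * sqrt (1 / m) \<le> 8 * sqrt (d / m)" by linarith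
  have l1d: "ln (1 / \<delta>) \<ge> 0" using \<delta> by simp
  have "ln (1 / \<delta>) \<le> ln (4 / \<delta>)" using \<delta> by (simp add: divide_right_mono)
  then have "32 * ln (1 / \<delta>) / m \<le> 12\<^sup>2 * (ln (4 / \<delta>) / (2 * m))" using m l1d by (simp add: field_simps)
  then have "sqrt (32 * ln (1 / \<delta>) / m) \<le> sqrt (12\<^sup>2 * (ln (4 / \<delta>) / (2 * m)))" by simp
  also have "\<dots> = 12 * sqrt (ln (4 / \<delta>) / (2 * m))" by (rule c_sqrt[symmetric]) simp
  finally show ?thesis using 1 by linarith
qed

theorem mainTheorem6:
  fixes D :: "((real^'d) \<times> real) measure"
    and p m :: nat and \<sigma> \<delta> :: real and wstar :: "real^'d"
  assumes p: "p \<in> {1, 2}"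
    and prob: "prob_space D"
    and sets_D: "sets D = sets borel"
    and bdd: "AE z in D. (\<forall>i. \<bar>fst z $ i\<bar> \<le> 1) \<and> \<bar>snd z\<bar> \<le> 1"
    and bddF: "AE z in D. \<forall>w. pnorm p w \<le> 1 \<longrightarrow> \<bar>w \<bullet> fst z\<bar> \<le> 1"
    and wstar: "pnorm p wstar \<le> 1"
    and noise_mean: "AE z in D. real_cond_exp D (vimage_algebra (space D) fst borel)
                        (\<lambda>z. snd z - wstar \<bullet> fst z) z = 0"
    and noise_var: "AE z in D. real_cond_exp D (vimage_algebra (space D) fst borel)
                        (\<lambda>z. (snd z - wstar \<bullet> fst z)^2) z = \<sigma>^2"
    and m: "m > 0"
    and \<delta>: "0 < \<delta>" "\<delta> < 1"
  shows "\<exists>A \<in> sets (PiM {..<m} (\<lambda>_. D)).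
           measure (PiM {..<m} (\<lambda>_. D)) A \<ge> 1 - \<delta> \<and>
           (\<forall>S\<in>A. \<forall>w. is_erm p m S w \<longrightarrow>
              \<bar>\<sigma>^2 - emp_risk m S w\<bar> \<le>
                (if p = 1 then 8 * sqrt (2 * ln (2 * real CARD('d)) / real m)
                 else 8 * sqrt (real CARD('d) / real m))
                + 12 * sqrt (ln (4 / \<delta>) / (2 * real m)))"
proof -
  define R where "R = (if p = 1 then 8 * sqrt (2 * ln (2 * real CARD('d)) / real m)
                 else 8 * sqrt (real CARD('d) / real m))
                + 12 * sqrt (ln (4 / \<delta>) / (2 * real m))"
  have d1: "real CARD('d) \<ge> 1" by (simp add: Suc_le_eq)
  have mr: "real m > 0" using m by simp
  have "\<exists>A \<in> sets (PiM {..<m} (\<lambda>_. D)). measure (PiM {..<m} (\<lambda>_. D)) A \<ge> 1 - \<delta> \<and>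
    (\<forall>S\<in>A. \<forall>w. pnorm p w \<le> 1 \<longrightarrow> \<bar>emp_risk m S w - (\<integral>z. (w \<bullet> fst z - snd z)\<^sup>2 \<partial>D)\<bar> \<le> R)"
  proof (cases "p = 1")
    case True
    from case1_main[OF prob sets_D bdd m \<delta>] obtain A where
      A: "A \<in> sets (PiM {..<m} (\<lambda>_. D))" "measure (PiM {..<m} (\<lambda>_. D)) A \<ge> 1 - \<delta>"
      and hA: "\<And>S w. S \<in> A \<Longrightarrow> norm1 w \<le> 1 \<Longrightarrow> \<bar>emp_risk m S w - (\<integral>z. (w \<bullet> fst z - snd z)\<^sup>2 \<partial>D)\<bar>
        \<le> 4 * sqrt (2 * ln (2 * real CARD(('d \<times> 'd) + 'd option) / \<delta>) / real m)"
      by blast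
    have card: "real CARD(('d \<times> 'd) + 'd option) = real CARD('d) * real CARD('d) + (real CARD('d) + 1)"
      by (simp add: card_UNIV_sum card_UNIV_option)
    have le: "4 * sqrt (2 * ln (2 * real CARD(('d \<times> 'd) + 'd option) / \<delta>) / real m) \<le> R"
      unfolding R_def using True arith1[OF d1 card mr \<delta>] by simp
    show ?thesis
      using A hA le True by (intro bexI[OF _ A(1)] conjI A(2) ballI allI impI) (auto simp: pnorm_def intro: order_trans)
  next
    case False
    with p have p2: "p = 2" by auto
    from case2_main[OF prob sets_D bdd bddF[unfolded p2] m \<delta>] obtain A where
      A: "A \<in> sets (PiM {..<m} (\<lambda>_. D))" "measure (PiM {..<m} (\<lambda>_. D)) A \<ge> 1 - \<delta>"
      and hA: "\<And>S w. S \<in> A \<Longrightarrow> norm w \<le> 1 \<Longrightarrow> \<bar>emp_risk m S w - (\<integral>z. (w \<bullet> fst z - snd z)\<^sup>2 \<partial>D)\<bar>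
        \<le> 4 * sqrt (1 / real m) + sqrt (32 * ln (1 / \<delta>) / real m)"
      by blast
    have le: "4 * sqrt (1 / real m) + sqrt (32 * ln (1 / \<delta>) / real m) \<le> R"
      unfolding R_def using p2 arith2[OF d1 mr \<delta>] by simp
    show ?thesis
      using A hA le p2 by (intro bexI[OF _ A(1)] conjI A(2) ballI allI impI) (auto simp: pnorm_def intro: order_trans)
  qed
  then obtain A where A: "A \<in> sets (PiM {..<m} (\<lambda>_. D))" "measure (PiM {..<m} (\<lambda>_. D)) A \<ge> 1 - \<delta>"
    and hA: "\<And>S w. S \<in> A \<Longrightarrow> pnorm p w \<le> 1 \<Longrightarrow> \<bar>emp_risk m S w - (\<integral>z. (w \<bullet> fst z - snd z)\<^sup>2 \<partial>D)\<bar> \<le> R"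
    by blast
  show ?thesis
    using final_combine[OF prob sets_D bdd wstar noise_mean noise_var A hA] unfolding R_def by blast
qed


end
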